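(* Assume $0<D(P_1\|P_2)<\infty$ and $0<D(P_2\|P_1)<\infty$, and fix $\tau\in(-D(P_1\|P_2),D(P_2\|P_1))$. For each $n\ge2$ let $G_n$ be any connected undirected graph on $n$ nodes, let $y_1,\dots,y_n$ be i.i.d. with node $i$ observing $y_i$, and run BQ-CADMM on $G_n$ with local data $r_i=\log\frac{dP_1}{dP_2}(y_i)$, quantizer parameters $a=-D(P_2\|P_1)$, $\Delta=D(P_1\|P_2)+D(P_2\|P_1)$, $\delta=D(P_1\|P_2)+\tau$ (so the quantizer threshold is $-\tau$), and $$\rho=\frac{1}{6n^2(D(P_1\|P_2)+D(P_2\|P_1))}.$$ Let $\mathcal A_n=\{y^n:\text{BQ-CADMM cycles}\}\cup\{y^n:\text{BQ-CADMM converges at }D(P_1\|P_2)\}$, $\alpha_n=P_1(\mathcal A_n^c)$, $\beta_n=P_2(\mathcal A_n)$. Then $$\liminf_{n\to\infty}-\frac1n\log\alpha_n=\Lambda^*(\tau),\qquad \liminf_{n\to\infty}-\frac1n\log\beta_n=\Lambda^*(\tau)-\tau.$$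
   Context: $P_1,P_2$ are mutually absolutely continuous probability measures on a Polish space (or finite set) $\Sigma$; $\log$ is the natural logarithm; $D(P\|P')=\mathbb E_P[\log\frac{dP}{dP'}]$; probabilities of subsets of $\Sigma^n$ refer to product measures. $\Lambda(\lambda)=\log\mathbb E_{P_1}\big[e^{-\lambda\log\frac{dP_1}{dP_2}(y)}\big]$ for $\lambda\in\mathbb R$, and $\Lambda^*(\tau)=\sup_{\lambda\in\mathbb R}\{\lambda\tau-\Lambda(\lambda)\}$. Network and algorithm: $G$ is a connected undirected simple graph on nodes $\{1,\dots,n\}$ with $m$ edges; $\mathcal N_i$ is the set of neighbors of node $i$ ($i\notin\mathcal N_i$). Given $a\in\mathbb R$, $\Delta>0$, $\delta\in(0,\Delta)$, the $\delta$-quantizer is $\mathcal Q_\delta(x)=a$ if $x\le a+\Delta-\delta$ and $a+\Delta$ otherwise. Given local data $r_1,\dots,r_n\in\mathbb R$ and $\rho>0$, BQ-CADMM is the deterministic iteration with $x_i^0=0$, $\alpha_i^0=0$ and, for $k\ge0$, $$x_i^{k+1}=\frac{1}{1+2\rho|\mathcal N_i|}\Big(\rho|\mathcal N_i|\mathcal Q_\delta(x_i^k)+\rho\sum_{j\in\mathcal N_i}\mathcal Q_\delta(x_j^k)-\alpha_i^k+r_i\Big),\quad \alpha_i^{k+1}=\alpha_i^k+\rho\Big(|\mathcal N_i|\mathcal Q_\delta(x_i^{k+1})-\sum_{j\in\mathcal N_i}\mathcal Q_\delta(x_j^{k+1})\Big).$$ BQ-CADMM "converges at $c$" if there is $k_0$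 with $\mathcal Q_\delta(x_i^k)=c$ for all $i$ and all $k\ge k_0$; it "cycles" if it converges at neither $a$ nor $a+\Delta$. *)

theory Defs
  imports "HOL-Probability.Probability"
begin

text \<open>Log-likelihood ratio log (dP/dQ)(x), with dP/dQ the Radon-Nikodym derivative of P w.r.t. Q.\<close>
definition llr :: "'a measure \<Rightarrow> 'a measure \<Rightarrow> 'a \<Rightarrow> real" where
  "llr P Q x = ln (enn2real (RN_deriv Q P x))"

text \<open>KL divergence D(P||Q) = E_P[log dP/dQ] (meaningful when the integrand is integrable).\<close>
definition KL :: "'a measure \<Rightarrow> 'a measure \<Rightarrow> real" where
  "KL P Q = integral\<^sup>L P (llr P Q)"

definition Lam :: "'a measure \<Rightarrow> 'a measure \<Rightarrow> real \<Rightarrow> ereal" where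
  "Lam P1 P2 l = (let I = (\<integral>\<^sup>+ y. ennreal (exp (- l * llr P1 P2 y)) \<partial>P1)
                  in if I = \<infinity> then \<infinity> else ereal (ln (enn2real I)))"

definition Lam_star :: "'a measure \<Rightarrow> 'a measure \<Rightarrow> real \<Rightarrow> ereal" where
  "Lam_star P1 P2 t = (SUP l \<in> (UNIV::real set). ereal (l * t) - Lam P1 P2 l)"

definition err_exp :: "nat \<Rightarrow> real \<Rightarrow> ereal" where
  "err_exp n p = (if p = 0 then \<infinity> else ereal (- (1 / real n) * ln p))"

definition simple_graph_on :: "nat \<Rightarrow> (nat \<Rightarrow> nat \<Rightarrow> bool) \<Rightarrow> bool" where
  "simple_graph_on n E \<longleftrightarrow>
     (\<forall>i j. E i j \<longrightarrow> i \<in> {1..n} \<and> j \<in> {1..n} \<and> i \<noteq> j) \<and> (\<forall>i j. E i j \<longrightarrow> E j i)"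

definition connected_on :: "nat \<Rightarrow> (nat \<Rightarrow> nat \<Rightarrow> bool) \<Rightarrow> bool" where
  "connected_on n E \<longleftrightarrow> (\<forall>i\<in>{1..n}. \<forall>j\<in>{1..n}. E\<^sup>*\<^sup>* i j)"

definition nbrs :: "nat \<Rightarrow> (nat \<Rightarrow> nat \<Rightarrow> bool) \<Rightarrow> nat \<Rightarrow> nat set" where
  "nbrs n E i = {j \<in> {1..n}. E i j}"

definition quant :: "real \<Rightarrow> real \<Rightarrow> real \<Rightarrow> real \<Rightarrow> real" where
  "quant a D d x = (if x \<le> a + D - d then a else a + D)"

definition bq_step :: "nat \<Rightarrow> (nat \<Rightarrow> nat \<Rightarrow> bool) \<Rightarrow> real \<Rightarrow> real \<Rightarrow> real \<Rightarrow> real \<Rightarrow>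
    (nat \<Rightarrow> real) \<Rightarrow> (nat \<Rightarrow> real) \<times> (nat \<Rightarrow> real) \<Rightarrow> (nat \<Rightarrow> real) \<times> (nat \<Rightarrow> real)" where
  "bq_step n E a D d \<rho> r s =
     (let x = fst s; al = snd s; Q = quant a D d;
          x' = (\<lambda>i. (\<rho> * real (card (nbrs n E i)) * Q (x i) + \<rho> * (\<Sum>j\<in>nbrs n E i. Q (x j))
                      - al i + r i) / (1 + 2 * \<rho> * real (card (nbrs n E i))));
          al' = (\<lambda>i. al i + \<rho> * (real (card (nbrs n E i)) * Q (x' i) - (\<Sum>j\<in>nbrs n E i. Q (x' j))))
      in (x', al'))"

definition bq_iter :: "nat \<Rightarrow> (nat \<Rightarrow> nat \<Rightarrow> bool) \<Rightarrow> real \<Rightarrow> real \<Rightarrow> real \<Rightarrow> real \<Rightarrow>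
    (nat \<Rightarrow> real) \<Rightarrow> nat \<Rightarrow> (nat \<Rightarrow> real) \<times> (nat \<Rightarrow> real)" where
  "bq_iter n E a D d \<rho> r k = (bq_step n E a D d \<rho> r ^^ k) (\<lambda>_. 0, \<lambda>_. 0)"

definition bq_converges_at :: "nat \<Rightarrow> (nat \<Rightarrow> nat \<Rightarrow> bool) \<Rightarrow> real \<Rightarrow> real \<Rightarrow> real \<Rightarrow> real \<Rightarrow>
    (nat \<Rightarrow> real) \<Rightarrow> real \<Rightarrow> bool" where
  "bq_converges_at n E a D d \<rho> r c \<longleftrightarrow>
     (\<exists>k0. \<forall>k\<ge>k0. \<forall>i\<in>{1..n}. quant a D d (fst (bq_iter n E a D d \<rho> r k) i) = c)"

definition bq_cycles :: "nat \<Rightarrow> (nat \<Rightarrow> nat \<Rightarrow> bool) \<Rightarrow> real \<Rightarrow> real \<Rightarrow> real \<Rightarrow> real \<Rightarrow>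
    (nat \<Rightarrow> real) \<Rightarrow> bool" where
  "bq_cycles n E a D d \<rho> r \<longleftrightarrow>
     \<not> bq_converges_at n E a D d \<rho> r a \<and> \<not> bq_converges_at n E a D d \<rho> r (a + D)"

definition accept_set :: "'a measure \<Rightarrow> 'a measure \<Rightarrow> real \<Rightarrow> nat \<Rightarrow> (nat \<Rightarrow> nat \<Rightarrow> bool) \<Rightarrow> (nat \<Rightarrow> 'a) set" where
  "accept_set M1 M2 \<tau> n E = {y \<in> space (PiM {1..n} (\<lambda>_. M1)).
              let r = (\<lambda>i. llr M1 M2 (y i));
                  a = - KL M2 M1;
                  D = KL M1 M2 + KL M2 M1;
                  d = KL M1 M2 + \<tau>;
                  \<rho> = 1 / (6 * (real n)\<^sup>2 * D)
              in bq_cycles n E a D d \<rho> r \<or> bq_converges_at n E a D d \<rho> r (KL M1 M2)}"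

end

theory Submission
  imports Defs
begin

lemma exp_diff_le: "exp u - exp v \<le> (u - v) * exp u" for u v :: real
proof -
  have "exp (v - u) \<ge> 1 + (v - u)" by (rule exp_ge_add_one_self)
  hence "exp v \<ge> exp u * (1 + (v - u))"
    by (metis exp_diff exp_gt_zero less_eq_real_def pos_le_divide_eq mult.commute)
  thus ?thesis by (simp add: algebra_simps)
qed

lemma abs_exp_diff: "\<bar>exp u - exp v\<bar> \<le> \<bar>u - v\<bar> * max (exp u) (exp v)" for u v :: real
proof (cases "u \<ge> v")
  case True
  have "exp u - exp v \<le> (u - v) * exp u" by (rule exp_diff_le)
  moreover have "exp v \<le> exp u" using True by simp
  ultimately show ?thesis using True by (simp add: max_def)
next
  case False
  have "exp v - exp u \<le> (v - u) * exp v" by (rule exp_diff_le)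
  moreover have "exp u \<le> exp v" using False by simp
  ultimately show ?thesis using False by (simp add: max_def abs_minus_commute)
qed

lemma exp_mult_le: "0 \<le> \<nu> \<Longrightarrow> \<nu> \<le> 1 \<Longrightarrow> exp (\<nu> * y) \<le> 1 + exp y" for \<nu> y :: real
proof (cases "y \<ge> 0")
  case True
  assume "0 \<le> \<nu>" "\<nu> \<le> 1"
  hence "\<nu> * y \<le> y" using True by (simp add: mult_left_le_one_le)
  hence "exp (\<nu> * y) \<le> exp y" by simp
  thus ?thesis by linarith
next
  case False
  assume "0 \<le> \<nu>" "\<nu> \<le> 1"
  hence "\<nu> * y \<le> 0" using False by (simp add: mult_nonneg_nonpos)
  hence "exp (\<nu> * y) \<le> 1" by simp
  thus ?thesis using exp_gt_zero[of y] by linarith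
qed

lemma abs_exp_mult_1: "0 \<le> \<nu> \<Longrightarrow> \<nu> \<le> 1 \<Longrightarrow> \<bar>exp (\<nu> * y) - 1\<bar> \<le> \<nu> * \<bar>y\<bar> * (1 + exp y)" for \<nu> y :: real
proof -
  assume n: "0 \<le> \<nu>" "\<nu> \<le> 1"
  have A: "\<bar>exp (\<nu> * y) - exp 0\<bar> \<le> \<bar>\<nu> * y - 0\<bar> * max (exp (\<nu> * y)) (exp 0)" by (rule abs_exp_diff)
  have B: "max (exp (\<nu> * y)) (exp 0) \<le> 1 + exp y" using exp_mult_le[OF n] by simp
  have "\<bar>\<nu> * y - 0\<bar> * max (exp (\<nu> * y)) (exp 0) \<le> \<bar>\<nu> * y\<bar> * (1 + exp y)"
    using mult_left_mono[OF B, of "\<bar>\<nu> * y\<bar>"] by simp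
  also have "\<bar>\<nu> * y\<bar> = \<nu> * \<bar>y\<bar>" using n by (simp add: abs_mult)
  finally show ?thesis using A by simp
qed

lemma exp_taylor2: "0 \<le> exp t - 1 - t \<and> exp t - 1 - t \<le> t\<^sup>2 * (1 + exp \<bar>t\<bar>)" for t :: real
proof
  show "0 \<le> exp t - 1 - t" using exp_ge_add_one_self[of t] by linarith
  have a: "exp t - 1 - t \<le> t * (exp t - 1)"
  proof -
    have "exp (- t) \<ge> 1 + (- t)" by (rule exp_ge_add_one_self)
    hence "exp (-t) * exp t \<ge> (1 - t) * exp t" by (simp add: mult_right_mono)
    thus ?thesis by (simp add: exp_minus algebra_simps)
  qed
  have A: "\<bar>exp t - exp 0\<bar> \<le> \<bar>t - 0\<bar> * max (exp t) (exp 0)" by (rule abs_exp_diff)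
  have B: "max (exp t) (exp 0) \<le> 1 + exp \<bar>t\<bar>" by (simp add: max_def add_increasing)
  have "\<bar>t - 0\<bar> * max (exp t) (exp 0) \<le> \<bar>t\<bar> * (1 + exp \<bar>t\<bar>)"
    using mult_left_mono[OF B, of "\<bar>t\<bar>"] by simp
  with A have C: "\<bar>exp t - 1\<bar> \<le> \<bar>t\<bar> * (1 + exp \<bar>t\<bar>)" by simp
  have "t * (exp t - 1) \<le> \<bar>t * (exp t - 1)\<bar>" by (rule abs_ge_self)
  also have "\<dots> = \<bar>t\<bar> * \<bar>exp t - 1\<bar>" by (rule abs_mult)
  also have "\<dots> \<le> \<bar>t\<bar> * (\<bar>t\<bar> * (1 + exp \<bar>t\<bar>))" by (rule mult_left_mono[OF C]) simp
  also have "\<dots> = t\<^sup>2 * (1 + exp \<bar>t\<bar>)" by (simp add: power2_eq_square)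
  finally show "exp t - 1 - t \<le> t\<^sup>2 * (1 + exp \<bar>t\<bar>)" using a by simp
qed

lemma cosh_bound: "exp b + exp (- b) - 2 \<le> b\<^sup>2 * exp \<bar>b\<bar>" for b :: real
proof -
  have sq: "exp b + exp (- b) - 2 = (exp (b/2) - exp (-b/2))\<^sup>2"
    by (simp add: power2_eq_square algebra_simps exp_add[symmetric])
  have "\<bar>exp (b/2) - exp (-b/2)\<bar> \<le> \<bar>b/2 - (-b/2)\<bar> * max (exp (b/2)) (exp (-b/2))"
    by (rule abs_exp_diff)
  moreover have "max (exp (b/2)) (exp (-b/2)) = exp (\<bar>b\<bar>/2)" by (auto simp: max_def abs_if)
  ultimately have "\<bar>exp (b/2) - exp (-b/2)\<bar> \<le> \<bar>b\<bar> * exp (\<bar>b\<bar>/2)" by simp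
  hence "\<bar>exp (b/2) - exp (-b/2)\<bar>\<^sup>2 \<le> (\<bar>b\<bar> * exp (\<bar>b\<bar>/2))\<^sup>2"
    by (intro power_mono) auto
  also have "(\<bar>b\<bar> * exp (\<bar>b\<bar>/2))\<^sup>2 = b\<^sup>2 * exp \<bar>b\<bar>"
  proof -
    have "(exp (\<bar>b\<bar>/2))\<^sup>2 = exp \<bar>b\<bar>" by (simp add: power2_eq_square exp_add[symmetric])
    thus ?thesis by (simp add: power_mult_distrib)
  qed
  finally show ?thesis using sq by simp
qed

lemma sq_le_exp: "0 < \<epsilon> \<Longrightarrow> x\<^sup>2 \<le> (4 / \<epsilon>\<^sup>2) * exp (\<epsilon> * \<bar>x\<bar>)" for x \<epsilon> :: real
proof -
  assume e: "0 < \<epsilon>"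
  let ?t = "\<epsilon> * \<bar>x\<bar>"
  have "exp ?t = (exp (?t/2))\<^sup>2" by (simp add: power2_eq_square exp_add[symmetric])
  moreover have h1: "?t/2 \<le> exp (?t/2)" using exp_ge_add_one_self[of "?t/2"] by linarith
  moreover have "(?t/2)\<^sup>2 \<le> (exp (?t/2))\<^sup>2" by (rule power_mono[OF h1]) (use e in simp)
  ultimately have "exp ?t \<ge> (?t/2)\<^sup>2" by simp
  hence "(4 / \<epsilon>\<^sup>2) * exp ?t \<ge> (4 / \<epsilon>\<^sup>2) * (?t/2)\<^sup>2" using e by (intro mult_left_mono) auto
  moreover have "(4 / \<epsilon>\<^sup>2) * (?t/2)\<^sup>2 = x\<^sup>2" using e by (simp add: power2_eq_square field_simps)
  ultimately show ?thesis by simp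
qed

lemma sq_exp_bound:
  fixes x \<epsilon> \<nu> :: real
  assumes e: "0 < \<epsilon>" and n: "\<epsilon> \<le> \<nu>" "\<nu> \<le> 1 - \<epsilon>"
  shows "x\<^sup>2 * exp (- \<nu> * x) \<le> (4 / \<epsilon>\<^sup>2) * (1 + exp (- x))"
proof -
  have "x\<^sup>2 * exp (- \<nu> * x) \<le> (4 / \<epsilon>\<^sup>2) * exp (\<epsilon> * \<bar>x\<bar>) * exp (- \<nu> * x)"
    using sq_le_exp[OF e, of x] by (intro mult_right_mono) auto
  also have "\<dots> = (4 / \<epsilon>\<^sup>2) * exp (\<epsilon> * \<bar>x\<bar> - \<nu> * x)" by (simp add: exp_diff exp_minus field_simps)
  also have "\<dots> \<le> (4 / \<epsilon>\<^sup>2) * (1 + exp (- x))"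
  proof (intro mult_left_mono)
    show "exp (\<epsilon> * \<bar>x\<bar> - \<nu> * x) \<le> 1 + exp (- x)"
    proof (cases "x \<ge> 0")
      case True
      have "\<epsilon> * x \<le> \<nu> * x" using True n by (intro mult_right_mono) auto
      hence "\<epsilon> * \<bar>x\<bar> - \<nu> * x \<le> 0" using True by simp
      hence "exp (\<epsilon> * \<bar>x\<bar> - \<nu> * x) \<le> 1" by simp
      thus ?thesis using exp_gt_zero[of "-x"] by linarith
    next
      case False
      have "(\<epsilon> + \<nu>) * (- x) \<le> 1 * (- x)" using False n by (intro mult_right_mono) auto
      hence "\<epsilon> * \<bar>x\<bar> - \<nu> * x \<le> - x" using False by (simp add: algebra_simps)
      hence "exp (\<epsilon> * \<bar>x\<bar> - \<nu> * x) \<le> exp (- x)" by simp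
      thus ?thesis by linarith
    qed
  qed (use e in simp)
  finally show ?thesis .
qed


locale bqc =
  fixes n :: nat and E :: "nat \<Rightarrow> nat \<Rightarrow> bool" and a D d \<rho> :: real and r :: "nat \<Rightarrow> real"
  assumes G: "simple_graph_on n E" and conn: "connected_on n E" and n1: "n \<ge> 1"
    and rho: "\<rho> > 0" and Dpos: "D > 0" and dpos: "0 < d" and dD: "d < D"
begin

definition "N i = nbrs n E i"
definition "dg i = real (card (N i))"
definition "Q = quant a D d"
definition "X k = fst (bq_iter n E a D d \<rho> r k)"
definition "AL k = snd (bq_iter n E a D d \<rho> r k)"
definition "q k i = Q (X k i)"
definition "t = a + D - d"
definition "e k i = r i - AL k i - t"

lemma N_sub: "N i \<subseteq> {1..n}" unfolding N_def nbrs_def by auto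
lemma N_fin[simp]: "finite (N i)" using N_sub finite_subset by blast
lemma dg_le: "dg i \<le> real n"
proof -
  have "card (N i) \<le> card {1..n}" using card_mono[OF _ N_sub] by auto
  thus ?thesis by (simp add: dg_def)
qed
lemma dg_nn: "dg i \<ge> 0" by (simp add: dg_def)
lemma N_out: "i \<notin> {1..n} \<Longrightarrow> N i = {}"
  using G by (auto simp: N_def nbrs_def simple_graph_on_def)

lemma X0: "X 0 = (\<lambda>_. 0)" and AL0: "AL 0 = (\<lambda>_. 0)"
  by (auto simp: X_def AL_def bq_iter_def)

lemma X_Suc: "X (Suc k) i = (\<rho> * dg i * q k i + \<rho> * (\<Sum>j\<in>N i. q k j) - AL k i + r i) / (1 + 2 * \<rho> * dg i)"
  by (simp add: X_def AL_def bq_iter_def bq_step_def Let_def q_def Q_def dg_def N_def)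

lemma AL_Suc: "AL (Suc k) i = AL k i + \<rho> * (dg i * q (Suc k) i - (\<Sum>j\<in>N i. q (Suc k) j))"
proof -
  have "AL (Suc k) = snd (bq_step n E a D d \<rho> r (bq_iter n E a D d \<rho> r k))"
    by (simp add: AL_def bq_iter_def)
  moreover have "X (Suc k) = fst (bq_step n E a D d \<rho> r (bq_iter n E a D d \<rho> r k))"
    by (simp add: X_def bq_iter_def)
  ultimately show ?thesis
    by (simp add: bq_step_def Let_def q_def Q_def dg_def N_def AL_def)
qed

lemma q_cases: "q k i = a \<or> q k i = a + D"
  by (simp add: q_def Q_def quant_def)

lemma q_le: "q k i \<le> t + d" and q_ge: "q k i \<ge> t - (D - d)"
  using q_cases[of k i] dD dpos by (auto simp: t_def)

lemma den_pos: "1 + 2 * \<rho> * dg i > 0"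
  using rho dg_nn[of i] by (simp add: add_pos_nonneg)

lemma sumq_le: "(\<Sum>j\<in>N i. q k j) \<le> dg i * (t + d)"
proof -
  have "(\<Sum>j\<in>N i. q k j) \<le> (\<Sum>j\<in>N i. t + d)" by (rule sum_mono) (simp add: q_le)
  thus ?thesis by (simp add: dg_def)
qed
lemma sumq_ge: "(\<Sum>j\<in>N i. q k j) \<ge> dg i * (t - (D - d))"
proof -
  have "(\<Sum>j\<in>N i. q k j) \<ge> (\<Sum>j\<in>N i. t - (D - d))" by (rule sum_mono) (simp add: q_ge)
  thus ?thesis by (simp add: dg_def)
qed

lemma high_e:
  assumes "q (Suc k) i = a + D"
  shows "e k i > - 2 * \<rho> * dg i * d"
proof -
  have "X (Suc k) i > t"
    using assms Dpos by (auto simp: q_def Q_def quant_def t_def split: if_splits)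
  hence "(\<rho> * dg i * q k i + \<rho> * (\<Sum>j\<in>N i. q k j) - AL k i + r i) > t * (1 + 2 * \<rho> * dg i)"
    using den_pos[of i] by (simp add: X_Suc pos_less_divide_eq)
  moreover have "\<rho> * dg i * q k i \<le> \<rho> * dg i * (t + d)"
    using rho dg_nn[of i] q_le[of k i] by (simp add: mult_left_mono)
  moreover have "\<rho> * (\<Sum>j\<in>N i. q k j) \<le> \<rho> * (dg i * (t + d))"
    using rho sumq_le[of k i] by (simp add: mult_left_mono)
  ultimately show ?thesis by (simp add: e_def algebra_simps)
qed

lemma low_e:
  assumes "q (Suc k) i = a"
  shows "e k i \<le> 2 * \<rho> * dg i * (D - d)"
proof -
  have "X (Suc k) i \<le> t"
    using assms Dpos by (auto simp: q_def Q_def quant_def t_def split: if_splits)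
  hence "(\<rho> * dg i * q k i + \<rho> * (\<Sum>j\<in>N i. q k j) - AL k i + r i) \<le> t * (1 + 2 * \<rho> * dg i)"
    using den_pos[of i] by (simp add: X_Suc pos_divide_le_eq)
  moreover have "\<rho> * dg i * q k i \<ge> \<rho> * dg i * (t - (D - d))"
    using rho dg_nn[of i] q_ge[of k i] by (simp add: mult_left_mono)
  moreover have "\<rho> * (\<Sum>j\<in>N i. q k j) \<ge> \<rho> * (dg i * (t - (D - d)))"
    using rho sumq_ge[of i k] by (simp add: mult_left_mono)
  ultimately show ?thesis by (simp add: e_def algebra_simps)
qed

lemma incr: "AL (Suc k) i - AL k i = \<rho> * (\<Sum>j\<in>N i. q (Suc k) i - q (Suc k) j)"
  by (simp add: AL_Suc sum_subtractf dg_def)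

lemma incr_high:
  assumes "q (Suc k) i = a + D"
  shows "0 \<le> AL (Suc k) i - AL k i" "AL (Suc k) i - AL k i \<le> \<rho> * dg i * D"
proof -
  have "0 \<le> (\<Sum>j\<in>N i. q (Suc k) i - q (Suc k) j)"
    by (rule sum_nonneg) (use assms q_cases Dpos in \<open>metis diff_ge_0_iff_ge le_add_same_cancel1 less_eq_real_def order_refl\<close>)
  thus "0 \<le> AL (Suc k) i - AL k i" using rho by (simp add: incr)
  have "(\<Sum>j\<in>N i. q (Suc k) i - q (Suc k) j) \<le> (\<Sum>j\<in>N i. D)"
    by (rule sum_mono) (use assms q_cases Dpos in \<open>smt (verit)\<close>)
  thus "AL (Suc k) i - AL k i \<le> \<rho> * dg i * D" using rho
    by (simp add: incr dg_def mult_left_mono mult.assoc)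
qed

lemma incr_low:
  assumes "q (Suc k) i = a"
  shows "AL (Suc k) i - AL k i \<le> 0" "- (\<rho> * dg i * D) \<le> AL (Suc k) i - AL k i"
proof -
  have "(\<Sum>j\<in>N i. q (Suc k) i - q (Suc k) j) \<le> 0"
    by (rule sum_nonpos) (use assms q_cases Dpos in \<open>smt (verit)\<close>)
  thus "AL (Suc k) i - AL k i \<le> 0" using rho by (simp add: incr mult_nonneg_nonpos)
  have "(\<Sum>j\<in>N i. - D) \<le> (\<Sum>j\<in>N i. q (Suc k) i - q (Suc k) j)"
    by (rule sum_mono) (use assms q_cases Dpos in \<open>smt (verit)\<close>)
  hence "- (dg i * D) \<le> (\<Sum>j\<in>N i. q (Suc k) i - q (Suc k) j)" by (simp add: dg_def)
  hence "\<rho> * (- (dg i * D)) \<le> \<rho> * (\<Sum>j\<in>N i. q (Suc k) i - q (Suc k) j)"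
    using rho mult_left_mono by fastforce
  thus "- (\<rho> * dg i * D) \<le> AL (Suc k) i - AL k i" by (simp add: incr mult.assoc)
qed

lemma e_Suc: "e (Suc k) i = e k i - (AL (Suc k) i - AL k i)"
  by (simp add: e_def)

lemma rnD: "\<rho> * dg i * D \<le> \<rho> * n * D"
  using rho Dpos dg_le[of i] by (simp add: mult_right_mono mult_left_mono)

lemma high_Suc: "q (Suc k) i = a + D \<Longrightarrow> e (Suc k) i > - 3 * \<rho> * n * D"
proof -
  assume h: "q (Suc k) i = a + D"
  have "2 * \<rho> * dg i * d \<le> 2 * \<rho> * dg i * D"
    using rho dg_nn[of i] dD by (simp add: mult_left_mono)
  thus ?thesis using high_e[OF h] incr_high[OF h] rnD[of i] by (simp add: e_Suc)
qed

lemma low_Suc: "q (Suc k) i = a \<Longrightarrow> e (Suc k) i \<ge> e k i"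
  using incr_low by (simp add: e_Suc)

lemma stay_above:
  assumes "q (Suc j) i = a + D"
  shows "e (Suc j + m) i > - 3 * \<rho> * n * D"
proof (induction m)
  case 0 then show ?case using high_Suc[OF assms] by simp
next
  case (Suc m)
  show ?case
  proof (cases "q (Suc (Suc j + m)) i = a")
    case True then show ?thesis using low_Suc[OF True] Suc by simp
  next
    case False then have "q (Suc (Suc j + m)) i = a + D" using q_cases by blast
    then show ?thesis using high_Suc by simp
  qed
qed

lemma e_upper: "e k i \<le> max (e 0 i) (3 * \<rho> * n * D)"
proof (induction k)
  case 0 then show ?case by simp
next
  case (Suc k)
  show ?case
  proof (cases "q (Suc k) i = a")
    case True
    have "2 * \<rho> * dg i * (D - d) \<le> 2 * \<rho> * dg i * D"
      using rho dg_nn[of i] dpos by (simp add: mult_left_mono)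
    then show ?thesis using low_e[OF True] incr_low[OF True] rnD[of i] by (simp add: e_Suc)
  next
    case False then have h: "q (Suc k) i = a + D" using q_cases by blast
    show ?thesis using incr_high(1)[OF h] Suc by (simp add: e_Suc)
  qed
qed

lemma e_lower: "e k i \<ge> min (e 0 i) (- 3 * \<rho> * n * D)"
proof (induction k)
  case 0 then show ?case by simp
next
  case (Suc k)
  show ?case
  proof (cases "q (Suc k) i = a")
    case True then show ?thesis using low_Suc[OF True] Suc by simp
  next
    case False then have "q (Suc k) i = a + D" using q_cases by blast
    then show ?thesis using high_Suc[of k i] by simp
  qed
qed


lemma antisym_sum: "(\<Sum>i\<in>{1..n}. \<Sum>j\<in>N i. f i - f j) = (0::real)"
proof -
  have sym: "\<And>i j. E i j = E j i" using G by (auto simp: simple_graph_on_def)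
  have A: "(\<Sum>i\<in>{1..n}. \<Sum>j\<in>N i. f j) = (\<Sum>i\<in>{1..n}. \<Sum>j\<in>{1..n}. if E i j then f j else 0)"
    unfolding N_def nbrs_def by (simp only: sum.inter_filter[OF finite_atLeastAtMost])
  also have "\<dots> = (\<Sum>j\<in>{1..n}. \<Sum>i\<in>{1..n}. if E i j then f j else 0)" by (rule sum.swap)
  also have "\<dots> = (\<Sum>j\<in>{1..n}. \<Sum>i\<in>{1..n}. if E j i then f j else 0)" by (simp add: sym)
  also have "\<dots> = (\<Sum>j\<in>{1..n}. \<Sum>i\<in>N j. f j)"
    unfolding N_def nbrs_def by (simp only: sum.inter_filter[OF finite_atLeastAtMost])
  finally show ?thesis by (simp add: sum_subtractf)
qed

lemma sum_AL: "(\<Sum>i\<in>{1..n}. AL k i) = 0"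
proof (induction k)
  case 0 then show ?case by (simp add: AL0)
next
  case (Suc k)
  have "(\<Sum>i\<in>{1..n}. AL (Suc k) i) = (\<Sum>i\<in>{1..n}. AL k i + \<rho> * (\<Sum>j\<in>N i. q (Suc k) i - q (Suc k) j))"
    by (rule sum.cong) (auto simp: incr[symmetric])
  also have "\<dots> = \<rho> * (\<Sum>i\<in>{1..n}. \<Sum>j\<in>N i. q (Suc k) i - q (Suc k) j)"
    using Suc by (simp add: sum.distrib sum_distrib_left)
  finally show ?case using antisym_sum[of "q (Suc k)"] by simp
qed

lemma sum_e: "(\<Sum>i\<in>{1..n}. e k i) = (\<Sum>i\<in>{1..n}. r i) - real n * t"
  using sum_AL[of k] by (simp add: e_def sum_subtractf)

definition "hh k i = (if q k i = a then 0 else 1::int)"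
definition "Z k i = (\<Sum>l<k. \<Sum>j\<in>N i. hh (Suc l) i - hh (Suc l) j)"

lemma q_hh: "q k i = a + D * of_int (hh k i)"
  using q_cases[of k i] Dpos by (auto simp: hh_def)

lemma AL_Z: "AL k i = \<rho> * D * of_int (Z k i)"
proof (induction k)
  case 0 then show ?case by (simp add: AL0 Z_def)
next
  case (Suc k)
  have "AL (Suc k) i = AL k i + \<rho> * (\<Sum>j\<in>N i. q (Suc k) i - q (Suc k) j)"
    using incr[of k i] by simp
  also have "(\<Sum>j\<in>N i. q (Suc k) i - q (Suc k) j) = D * of_int (\<Sum>j\<in>N i. hh (Suc k) i - hh (Suc k) j)"
    by (simp add: q_hh sum_distrib_left algebra_simps)
  finally show ?case using Suc by (simp add: Z_def algebra_simps)
qed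

lemma AL_bound: "\<bar>AL k i\<bar> \<le> \<bar>r i - t\<bar> + \<bar>e 0 i\<bar> + 3 * \<rho> * n * D"
proof -
  have eq: "AL k i = r i - t - e k i" by (simp add: e_def)
  have p: "0 \<le> 3 * \<rho> * n * D" using rho Dpos by simp
  have up: "e k i \<le> \<bar>e 0 i\<bar> + 3 * \<rho> * n * D"
  proof -
    have "max (e 0 i) (3 * \<rho> * n * D) \<le> \<bar>e 0 i\<bar> + 3 * \<rho> * n * D"
      using p abs_ge_self[of "e 0 i"] abs_ge_zero[of "e 0 i"] by (intro max.boundedI) linarith+
    thus ?thesis using e_upper[of k i] by linarith
  qed
  have lo: "e k i \<ge> - (\<bar>e 0 i\<bar> + 3 * \<rho> * n * D)"
  proof -
    have "min (e 0 i) (- 3 * \<rho> * n * D) \<ge> - (\<bar>e 0 i\<bar> + 3 * \<rho> * n * D)"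
      using p abs_ge_minus_self[of "e 0 i"] abs_ge_zero[of "e 0 i"]
        by (intro min.boundedI) (linarith, simp)
    thus ?thesis using e_lower[of i k] by linarith
  qed
  show ?thesis unfolding eq abs_le_iff using up lo abs_ge_self[of "r i - t"] abs_ge_minus_self[of "r i - t"]
    by linarith
qed

lemma finite_states: "finite (range (\<lambda>k. restrict (\<lambda>i. (Z k i, q k i)) {1..n}))"
proof -
  define C where "C i = (\<bar>r i - t\<bar> + \<bar>e 0 i\<bar> + 3 * \<rho> * n * D) / (\<rho> * D)" for i
  define M where "M i = \<lceil>C i\<rceil>" for i
  have rD: "\<rho> * D > 0" using rho Dpos by simp
  have Zb: "\<bar>Z k i\<bar> \<le> M i" for k i
  proof -
    have "\<rho> * D * \<bar>of_int (Z k i)\<bar> \<le> \<bar>r i - t\<bar> + \<bar>e 0 i\<bar> + 3 * \<rho> * n * D"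
      using AL_bound[of k i] rho Dpos by (simp add: AL_Z abs_mult)
    hence "\<bar>of_int (Z k i)\<bar> \<le> C i" using rD by (simp add: C_def pos_le_divide_eq mult.commute)
    thus ?thesis unfolding M_def by linarith
  qed
  have "restrict (\<lambda>i. (Z k i, q k i)) {1..n} \<in> PiE {1..n} (\<lambda>i. {-M i..M i} \<times> {a, a + D})" for k
  proof (rule PiE_I)
    fix i assume "i \<in> {1..n}"
    have "-M i \<le> Z k i" "Z k i \<le> M i" using Zb[of k i] by (simp_all add: abs_le_iff)
    then show "restrict (\<lambda>i. (Z k i, q k i)) {1..n} i \<in> {-M i..M i} \<times> {a, a + D}"
      using q_cases[of k i] \<open>i \<in> {1..n}\<close> by auto
  qed auto
  hence "range (\<lambda>k. restrict (\<lambda>i. (Z k i, q k i)) {1..n}) \<subseteq> PiE {1..n} (\<lambda>i. {-M i..M i} \<times> {a, a + D})"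
    by blast
  moreover have "finite (PiE {1..n} (\<lambda>i. {-M i..M i} \<times> {a, a + D}))"
    by (intro finite_PiE) auto
  ultimately show ?thesis using finite_subset by blast
qed

lemma determ:
  assumes "\<forall>i\<in>{1..n}. q k1 i = q k2 i \<and> AL k1 i = AL k2 i"
  shows "\<forall>i\<in>{1..n}. q (Suc k1) i = q (Suc k2) i \<and> AL (Suc k1) i = AL (Suc k2) i"
proof
  fix i assume i: "i \<in> {1..n}"
  have s: "(\<Sum>j\<in>N i. q k1 j) = (\<Sum>j\<in>N i. q k2 j)"
    by (rule sum.cong[OF refl]) (meson assms N_sub subsetD)
  have "X (Suc k1) i = X (Suc k2) i" using assms i by (simp add: X_Suc s)
  hence qi: "q (Suc k1) i = q (Suc k2) i" by (simp add: q_def)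
  have "q (Suc k1) j = q (Suc k2) j" if "j \<in> N i" for j
  proof -
    have "j \<in> {1..n}" using that N_sub[of i] by blast
    have "(\<Sum>l\<in>N j. q k1 l) = (\<Sum>l\<in>N j. q k2 l)"
      by (rule sum.cong[OF refl]) (meson assms N_sub subsetD)
    hence "X (Suc k1) j = X (Suc k2) j" using assms \<open>j \<in> {1..n}\<close> by (simp add: X_Suc)
    thus ?thesis by (simp add: q_def)
  qed
  hence s2: "(\<Sum>j\<in>N i. q (Suc k1) j) = (\<Sum>j\<in>N i. q (Suc k2) j)" by (rule sum.cong[OF refl])
  show "q (Suc k1) i = q (Suc k2) i \<and> AL (Suc k1) i = AL (Suc k2) i"
    using qi s2 assms i by (simp add: AL_Suc)
qed

lemma determ_all:
  assumes "\<forall>i\<in>{1..n}. q k1 i = q k2 i \<and> AL k1 i = AL k2 i"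
  shows "\<forall>i\<in>{1..n}. q (k1 + m) i = q (k2 + m) i \<and> AL (k1 + m) i = AL (k2 + m) i"
proof (induction m)
  case 0 then show ?case using assms by simp
next
  case (Suc m) then show ?case using determ[of "k1 + m" "k2 + m"] by simp
qed

lemma harmonic_const:
  assumes h: "\<forall>i\<in>{1..n}. (\<Sum>j\<in>N i. w i - w j) = (0::real)"
  shows "\<exists>c. \<forall>i\<in>{1..n}. w i = c"
proof -
  have ne: "{1..n} \<noteq> {}" using n1 by auto
  have fin: "finite (w ` {1..n})" by simp
  define i0 where "i0 = (SOME i. i \<in> {1..n} \<and> w i = Max (w ` {1..n}))"
  have "Max (w ` {1..n}) \<in> w ` {1..n}" using ne fin by (intro Max_in) auto
  hence "\<exists>i. i \<in> {1..n} \<and> w i = Max (w ` {1..n})" by (auto simp del: atLeastAtMost_iff)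
  hence i0m: "i0 \<in> {1..n} \<and> w i0 = Max (w ` {1..n})" unfolding i0_def by (rule someI_ex)
  have i0: "i0 \<in> {1..n}" "\<And>i. i\<in>{1..n} \<Longrightarrow> w i \<le> w i0"
    using i0m fin by auto
  have "E\<^sup>*\<^sup>* i0 j \<Longrightarrow> j \<in> {1..n} \<and> w j = w i0" for j
  proof (induction rule: rtranclp_induct)
    case base then show ?case using i0 by simp
  next
    case (step y z)
    have z: "z \<in> {1..n}" using step(2) G unfolding simple_graph_on_def by blast
    have zN: "z \<in> N y" using z step(2) unfolding N_def nbrs_def by blast
    have y: "y \<in> {1..n}" "w y = w i0" using step(3) by auto
    have nn: "0 \<le> w y - w l" if "l \<in> N y" for l
    proof -
      have "l \<in> {1..n}" using that N_sub[of y] by blast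
      thus ?thesis using i0(2)[of l] y(2) by simp
    qed
    have "(\<Sum>l\<in>N y. w y - w l) = 0" using h y(1) by blast
    hence "w y - w z = 0" using sum_nonneg_eq_0_iff[OF N_fin[of y], of "\<lambda>l. w y - w l"] nn zN by blast
    then show ?case using z y(2) by simp
  qed
  moreover have "E\<^sup>*\<^sup>* i0 j" if "j \<in> {1..n}" for j using conn i0(1) that unfolding connected_on_def by blast
  ultimately have "w j = w i0" if "j \<in> {1..n}" for j using that by blast
  thus ?thesis by blast
qed

lemma alg_upper:
  assumes "\<exists>k0. \<forall>k\<ge>k0. \<forall>i\<in>{1..n}. q k i = a"
  shows "(\<Sum>i\<in>{1..n}. r i) \<le> real n * t + 2 * \<rho> * D * (real n)\<^sup>2"
proof -
  obtain k0 where k0: "\<forall>k\<ge>k0. \<forall>i\<in>{1..n}. q k i = a" using assms by blast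
  have "e k0 i \<le> 2 * \<rho> * n * D" if "i \<in> {1..n}" for i
  proof -
    have "e k0 i \<le> 2 * \<rho> * dg i * (D - d)" using low_e k0 that by simp
    also have "\<dots> \<le> 2 * \<rho> * n * D"
      using rho dg_le[of i] dg_nn[of i] dpos dD
      by (intro mult_mono) auto
    finally show ?thesis .
  qed
  hence "(\<Sum>i\<in>{1..n}. e k0 i) \<le> (\<Sum>i\<in>{1..n}. 2 * \<rho> * n * D)" by (intro sum_mono) auto
  also have "\<dots> = 2 * \<rho> * D * (real n)\<^sup>2" by (simp add: power2_eq_square)
  finally show ?thesis using sum_e[of k0] by simp
qed


lemma alg_lower:
  assumes less: "(\<Sum>i\<in>{1..n}. r i) < real n * t - 3 * \<rho> * D * (real n)\<^sup>2"
  shows "\<exists>k0. \<forall>k\<ge>k0. \<forall>i\<in>{1..n}. q k i = a"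
proof -
  let ?st = "\<lambda>k. restrict (\<lambda>i. (Z k i, q k i)) {1..n}"
  have "\<not> inj ?st"
  proof
    assume "inj ?st"
    hence "finite (UNIV :: nat set)" using finite_imageD[OF finite_states] by blast
    thus False by simp
  qed
  then obtain k1 k2 where k12: "k1 \<noteq> k2" "?st k1 = ?st k2" unfolding inj_def by blast
  obtain K p where Kp: "p > 0" "?st K = ?st (K + p)"
  proof (cases "k1 < k2")
    case True thus ?thesis using that[of "k2 - k1" k1] k12 by simp
  next
    case False hence "k2 < k1" using k12 by simp
    thus ?thesis using that[of "k1 - k2" k2] k12 by simp
  qed
  have eq0: "\<forall>i\<in>{1..n}. q K i = q (K + p) i \<and> AL K i = AL (K + p) i"
  proof
    fix i assume i: "i \<in> {1..n}"
    have "?st K i = ?st (K + p) i" using Kp(2) by simp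
    hence "Z K i = Z (K + p) i" "q K i = q (K + p) i" using i by auto
    thus "q K i = q (K + p) i \<and> AL K i = AL (K + p) i" by (simp add: AL_Z)
  qed
  have per: "q (k + p) i = q k i" if "k \<ge> K" "i \<in> {1..n}" for k i
  proof -
    have "q (K + (k - K)) i = q (K + p + (k - K)) i"
      using determ_all[OF eq0, of "k - K"] that(2) by blast
    thus ?thesis using that(1) by (simp add: algebra_simps)
  qed
  have tele: "AL (K + m) i - AL K i = \<rho> * (\<Sum>l<m. \<Sum>j\<in>N i. q (Suc (K + l)) i - q (Suc (K + l)) j)" for m i
  proof (induction m)
    case 0 then show ?case by simp
  next
    case (Suc m)
    have "AL (K + Suc m) i - AL K i = (AL (Suc (K + m)) i - AL (K + m) i) + (AL (K + m) i - AL K i)"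
      by simp
    also have "\<dots> = \<rho> * (\<Sum>j\<in>N i. q (Suc (K + m)) i - q (Suc (K + m)) j) + (AL (K + m) i - AL K i)"
      by (simp add: incr)
    finally show ?case using Suc by (simp add: algebra_simps)
  qed
  define w where "w i = (\<Sum>l<p. q (Suc (K + l)) i)" for i
  have harm: "\<forall>i\<in>{1..n}. (\<Sum>j\<in>N i. w i - w j) = 0"
  proof
    fix i assume i: "i \<in> {1..n}"
    have "\<rho> * (\<Sum>l<p. \<Sum>j\<in>N i. q (Suc (K + l)) i - q (Suc (K + l)) j) = 0"
      using tele[of p i] eq0 i by simp
    hence "(\<Sum>l<p. \<Sum>j\<in>N i. q (Suc (K + l)) i - q (Suc (K + l)) j) = 0" using rho by simp
    hence "(\<Sum>j\<in>N i. \<Sum>l<p. q (Suc (K + l)) i - q (Suc (K + l)) j) = 0"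
      by (subst sum.swap) simp
    thus "(\<Sum>j\<in>N i. w i - w j) = 0" by (simp add: w_def sum_subtractf)
  qed
  obtain c where c: "\<forall>i\<in>{1..n}. w i = c" using harmonic_const[OF harm] by blast
  have qa: "q k i \<ge> a" for k i using q_cases[of k i] Dpos by auto
  have wsum: "w i - real p * a = (\<Sum>l<p. q (Suc (K + l)) i - a)" for i
    by (simp add: w_def sum_subtractf)
  show ?thesis
  proof (cases "\<forall>i\<in>{1..n}. w i = real p * a")
    case True
    have zero: "q (Suc (K + l)) i = a" if "i \<in> {1..n}" "l < p" for i l
    proof -
      have "(\<Sum>l<p. q (Suc (K + l)) i - a) = 0" using True that wsum[of i] by simp
      hence "\<forall>l\<in>{..<p}. q (Suc (K + l)) i - a = 0"
        using sum_nonneg_eq_0_iff[of "{..<p}" "\<lambda>l. q (Suc (K + l)) i - a"] qa by simp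
      thus ?thesis using that by simp
    qed
    have "\<forall>i\<in>{1..n}. q k i = a" if "k \<ge> Suc K" for k
      using that
    proof (induction k rule: less_induct)
      case (less k)
      show ?case
      proof (cases "k < Suc K + p")
        case True
        hence "k = Suc (K + (k - Suc K))" "k - Suc K < p" using less.prems by auto
        thus ?thesis using zero by metis
      next
        case False
        hence k: "k = (k - p) + p" "k - p \<ge> Suc K" "k - p < k" using Kp(1) by auto
        have "\<forall>i\<in>{1..n}. q (k - p) i = a" using less.IH[OF k(3) k(2)] .
        thus ?thesis using per[of "k - p"] k(1,2) by (metis Suc_leD)
      qed
    qed
    thus ?thesis by blast
  next
    case False
    then obtain i0 where i0: "i0 \<in> {1..n}" "w i0 \<noteq> real p * a" by blast
    have bnd: "e (K + p) i > - 3 * \<rho> * n * D" if i: "i \<in> {1..n}" for i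
    proof -
      have "w i \<noteq> real p * a" using c i i0 by metis
      hence "(\<Sum>l<p. q (Suc (K + l)) i - a) \<noteq> 0" using wsum[of i] by simp
      then obtain l where l: "l < p" "q (Suc (K + l)) i - a \<noteq> 0"
        by (meson lessThan_iff sum.neutral)
      hence h: "q (Suc (K + l)) i = a + D" using q_cases by (metis diff_self)
      have "Suc (K + l) + (p - 1 - l) = K + p" using l(1) by simp
      thus ?thesis using stay_above[OF h, of "p - 1 - l"] by simp
    qed
    have "(\<Sum>i\<in>{1..n}. - 3 * \<rho> * n * D) < (\<Sum>i\<in>{1..n}. e (K + p) i)"
      using n1 bnd by (intro sum_strict_mono) auto
    hence "- 3 * \<rho> * D * (real n)\<^sup>2 < (\<Sum>i\<in>{1..n}. r i) - real n * t"
      using sum_e[of "K + p"] by (simp add: power2_eq_square algebra_simps)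
    thus ?thesis using less by simp
  qed
qed

end

lemma prod_mgf:
  fixes Q :: "'a measure" and f :: "'a \<Rightarrow> real"
  assumes Q: "prob_space Q" and f[measurable]: "f \<in> borel_measurable Q" and I: "finite I"
  shows "(\<integral>\<^sup>+y. ennreal (exp (\<mu> * (\<Sum>i\<in>I. f (y i)))) \<partial>PiM I (\<lambda>_. Q))
        = (\<integral>\<^sup>+x. ennreal (exp (\<mu> * f x)) \<partial>Q) ^ card I"
proof -
  interpret product_sigma_finite "\<lambda>_. Q"
    using Q by (simp add: product_sigma_finite_def prob_space_imp_sigma_finite)
  have "(\<integral>\<^sup>+y. ennreal (exp (\<mu> * (\<Sum>i\<in>I. f (y i)))) \<partial>PiM I (\<lambda>_. Q))
      = (\<integral>\<^sup>+y. (\<Prod>i\<in>I. ennreal (exp (\<mu> * f (y i)))) \<partial>PiM I (\<lambda>_. Q))"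
    by (rule nn_integral_cong) (simp add: sum_distrib_left exp_sum I prod_ennreal)
  also have "\<dots> = (\<Prod>i\<in>I. (\<integral>\<^sup>+x. ennreal (exp (\<mu> * f x)) \<partial>Q))"
    by (rule product_nn_integral_prod[OF I]) simp
  finally show ?thesis by simp
qed

lemma chernoff:
  fixes Q :: "'a measure" and f :: "'a \<Rightarrow> real"
  assumes Q: "prob_space Q" and f[measurable]: "f \<in> borel_measurable Q" and I: "finite I"
    and lam: "lm \<ge> 0"
  shows "emeasure (PiM I (\<lambda>_. Q)) {y \<in> space (PiM I (\<lambda>_. Q)). c \<le> (\<Sum>i\<in>I. f (y i))}
     \<le> ennreal (exp (- lm * c)) * (\<integral>\<^sup>+x. ennreal (exp (lm * f x)) \<partial>Q) ^ card I"
proof -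
  let ?P = "PiM I (\<lambda>_. Q)"
  let ?A = "{y \<in> space ?P. c \<le> (\<Sum>i\<in>I. f (y i))}"
  have A[measurable]: "?A \<in> sets ?P" by measurable
  have "emeasure ?P ?A = (\<integral>\<^sup>+y. indicator ?A y \<partial>?P)" by simp
  also have "\<dots> \<le> (\<integral>\<^sup>+y. ennreal (exp (- lm * c)) * ennreal (exp (lm * (\<Sum>i\<in>I. f (y i)))) \<partial>?P)"
  proof (rule nn_integral_mono)
    fix y assume "y \<in> space ?P"
    show "indicator ?A y \<le> ennreal (exp (- lm * c)) * ennreal (exp (lm * (\<Sum>i\<in>I. f (y i))))"
    proof (cases "y \<in> ?A")
      case True
      hence "0 \<le> lm * ((\<Sum>i\<in>I. f (y i)) - c)" using lam by simp
      hence "1 \<le> exp (- lm * c) * exp (lm * (\<Sum>i\<in>I. f (y i)))"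
        by (simp add: exp_add[symmetric] algebra_simps)
      thus ?thesis using True by (simp add: ennreal_mult[symmetric])
    qed simp
  qed
  also have "\<dots> = ennreal (exp (- lm * c)) * (\<integral>\<^sup>+y. ennreal (exp (lm * (\<Sum>i\<in>I. f (y i)))) \<partial>?P)"
    by (rule nn_integral_cmult) measurable
  also have "\<dots> = ennreal (exp (- lm * c)) * (\<integral>\<^sup>+x. ennreal (exp (lm * f x)) \<partial>Q) ^ card I"
    by (simp add: prod_mgf[OF Q f I])
  finally show ?thesis .
qed

lemma tilt_lower:
  fixes Q :: "'a measure" and f :: "'a \<Rightarrow> real"
  assumes Q: "prob_space Q" and f[measurable]: "f \<in> borel_measurable Q" and I: "finite I"
    and s: "s \<ge> 0" and s': "s' \<ge> 0"
    and p0: "(\<integral>\<^sup>+x. ennreal (exp (lm * f x)) \<partial>Q) = ennreal p0"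
    and pp: "(\<integral>\<^sup>+x. ennreal (exp ((lm + s) * f x)) \<partial>Q) = ennreal pp"
    and pm: "(\<integral>\<^sup>+x. ennreal (exp ((lm - s') * f x)) \<partial>Q) = ennreal pm"
    and nn: "p0 \<ge> 0" "pp \<ge> 0" "pm \<ge> 0"
  defines "P \<equiv> PiM I (\<lambda>_. Q)" and "n \<equiv> card I"
  shows "p0 ^ n \<le> exp (n * max (lm * c1) (lm * c2)) *
           measure P {y \<in> space P. n * c1 < (\<Sum>i\<in>I. f (y i)) \<and> (\<Sum>i\<in>I. f (y i)) \<le> n * c2}
         + exp (- s * n * c2) * pp ^ n + exp (s' * n * c1) * pm ^ n"
proof -
  interpret P: prob_space P unfolding P_def by (intro prob_space_PiM) (simp add: Q)
  let ?S = "\<lambda>y. (\<Sum>i\<in>I. f (y i))"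
  let ?A = "{y \<in> space P. n * c1 < ?S y \<and> ?S y \<le> n * c2}"
  have A[measurable]: "?A \<in> sets P" unfolding P_def by measurable
  have Sm[measurable]: "?S \<in> borel_measurable P" unfolding P_def by measurable
  define mx where "mx = max (lm * c1) (lm * c2)"
  have pw: "ennreal (exp (lm * ?S y)) \<le> ennreal (exp (n * mx)) * indicator ?A y
      + (ennreal (exp (- s * n * c2)) * ennreal (exp ((lm + s) * ?S y))
      + ennreal (exp (s' * n * c1)) * ennreal (exp ((lm - s') * ?S y)))" if y: "y \<in> space P" for y
  proof -
    consider "y \<in> ?A" | "?S y > n * c2" | "?S y \<le> n * c1" using y by force
    thus ?thesis
    proof cases
      case 1
      have "lm * ?S y \<le> n * mx"
      proof (cases "lm \<ge> 0")
        case True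
        hence "lm * ?S y \<le> lm * (n * c2)" using 1 by (intro mult_left_mono) auto
        thus ?thesis unfolding mx_def by (simp add: algebra_simps max_mult_distrib_left)
      next
        case False
        hence "lm * ?S y \<le> lm * (n * c1)" using 1 by (intro mult_left_mono_neg) auto
        thus ?thesis unfolding mx_def by (simp add: algebra_simps max_mult_distrib_left)
      qed
      hence "ennreal (exp (lm * ?S y)) \<le> ennreal (exp (n * mx)) * indicator ?A y"
        using 1 by simp
      thus ?thesis by (rule order_trans) (simp add: add_increasing2)
    next
      case 2
      have "s * (n * c2) \<le> s * ?S y" using 2 s by (intro mult_left_mono) auto
      hence "exp (lm * ?S y) \<le> exp (- s * n * c2) * exp ((lm + s) * ?S y)"
        by (simp add: exp_add[symmetric] algebra_simps)
      hence "ennreal (exp (lm * ?S y)) \<le> ennreal (exp (- s * n * c2)) * ennreal (exp ((lm + s) * ?S y))"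
        by (simp add: ennreal_mult[symmetric])
      thus ?thesis by (rule order_trans) (simp add: add_increasing add_increasing2)
    next
      case 3
      have "s' * ?S y \<le> s' * (n * c1)" using 3 s' by (intro mult_left_mono) auto
      hence "exp (lm * ?S y) \<le> exp (s' * n * c1) * exp ((lm - s') * ?S y)"
        by (simp add: exp_add[symmetric] algebra_simps)
      hence "ennreal (exp (lm * ?S y)) \<le> ennreal (exp (s' * n * c1)) * ennreal (exp ((lm - s') * ?S y))"
        by (simp add: ennreal_mult[symmetric])
      thus ?thesis by (rule order_trans) (simp add: add_increasing)
    qed
  qed
  have "ennreal (p0 ^ n) = (\<integral>\<^sup>+y. ennreal (exp (lm * ?S y)) \<partial>P)"
    using prod_mgf[OF Q f I, of lm] p0 nn by (simp add: P_def n_def ennreal_power)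
  also have "\<dots> \<le> (\<integral>\<^sup>+y. ennreal (exp (n * mx)) * indicator ?A y
      + (ennreal (exp (- s * n * c2)) * ennreal (exp ((lm + s) * ?S y))
      + ennreal (exp (s' * n * c1)) * ennreal (exp ((lm - s') * ?S y))) \<partial>P)"
    by (rule nn_integral_mono) (rule pw)
  also have "\<dots> = ennreal (exp (n * mx)) * emeasure P ?A
      + (ennreal (exp (- s * n * c2)) * ennreal (pp ^ n) + ennreal (exp (s' * n * c1)) * ennreal (pm ^ n))"
    using prod_mgf[OF Q f I, of "lm + s"] prod_mgf[OF Q f I, of "lm - s'"] pp pm nn
    by (simp add: nn_integral_add nn_integral_cmult P_def n_def ennreal_power)
  also have "\<dots> = ennreal (exp (n * mx) * measure P ?A + exp (- s * n * c2) * pp ^ n + exp (s' * n * c1) * pm ^ n)"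
    using nn by (simp add: P.emeasure_eq_measure ennreal_mult[symmetric] ennreal_plus[symmetric] del: ennreal_plus)
  finally show ?thesis unfolding mx_def
    using nn by (subst (asm) ennreal_le_iff) (auto intro!: add_nonneg_nonneg)
qed


lemma llr_measurable[measurable]: "llr M N \<in> borel_measurable N"
  unfolding llr_def by measurable

lemma rn_inverse:
  assumes P1: "prob_space M1" and P2: "prob_space M2" and sets: "sets M1 = sets M2"
    and ac12: "absolutely_continuous M1 M2" and ac21: "absolutely_continuous M2 M1"
  shows "AE x in M1. RN_deriv M1 M2 x = ennreal (exp (- llr M1 M2 x))"
proof -
  interpret P1: prob_space M1 by fact
  interpret P2: prob_space M2 by fact
  let ?f = "RN_deriv M2 M1"
  have fm[measurable]: "?f \<in> borel_measurable M2" by simp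
  have fm1[measurable]: "?f \<in> borel_measurable M1" by (subst measurable_cong_sets[OF sets refl]) (rule fm)
  have dens: "density M2 ?f = M1" using P2.density_RN_deriv[OF ac21] sets by simp
  have fin: "AE x in M2. ?f x \<noteq> \<infinity>"
    using P2.RN_deriv_finite[OF prob_space_imp_sigma_finite[OF P1] ac21] sets by simp
  have z: "{x \<in> space M2. ?f x = 0} \<in> sets M2" by measurable
  have "emeasure M1 {x \<in> space M2. ?f x = 0} = (\<integral>\<^sup>+x. ?f x * indicator {x \<in> space M2. ?f x = 0} x \<partial>M2)"
    by (subst dens[symmetric]) (rule emeasure_density[OF fm z])
  also have "\<dots> = 0" by (rule nn_integral_0_iff_AE[THEN iffD2]) (auto simp: indicator_def)
  finally have "emeasure M1 {x \<in> space M2. ?f x = 0} = 0" .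
  hence "emeasure M2 {x \<in> space M2. ?f x = 0} = 0"
    using absolutely_continuousD[OF ac12] z sets by simp
  hence nz: "AE x in M2. ?f x \<noteq> 0"
    using z by (subst AE_iff_measurable[OF z]) auto
  have good2: "AE x in M2. 0 < enn2real (?f x)"
    using fin nz by eventually_elim (auto simp: enn2real_positive_iff less_top[symmetric] zero_less_iff_neq_zero)
  have good1: "AE x in M1. 0 < enn2real (?f x)"
    by (rule absolutely_continuous_AE[OF sets ac21 good2])
  define h where "h x = ennreal (exp (- llr M1 M2 x))" for x
  have hm[measurable]: "h \<in> borel_measurable M2" unfolding h_def llr_def by measurable
  have hm1[measurable]: "h \<in> borel_measurable M1" by (subst measurable_cong_sets[OF sets refl]) (rule hm)
  have "density M1 h = density (density M2 ?f) h" using dens by simp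
  also have "\<dots> = density M2 (\<lambda>x. ?f x * h x)"
    using hm by (intro density_density_eq) simp_all
  also have "\<dots> = density M2 (\<lambda>_. 1)"
  proof (rule density_cong)
    show "AE x in M2. ?f x * h x = 1"
      using good2 fin
    proof eventually_elim
      case (elim x)
      have e: "?f x = ennreal (enn2real (?f x))" using elim(2) by (simp add: less_top)
      have "exp (- llr M1 M2 x) = 1 / enn2real (?f x)"
        using elim(1) by (simp add: llr_def exp_minus inverse_eq_divide)
      thus ?case using elim(1) by (subst e) (simp add: h_def ennreal_mult[symmetric])
    qed
  qed simp_all
  also have "\<dots> = M2" by (rule density_1)
  finally have "density M1 h = M2" .
  from P1.RN_deriv_unique[OF hm1 this] show ?thesis by (simp add: h_def eq_commute)
qed


lemma err_nonneg: "0 \<le> p \<Longrightarrow> p \<le> 1 \<Longrightarrow> 0 \<le> err_exp n p"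
proof -
  assume p: "0 \<le> p" "p \<le> 1"
  show ?thesis
  proof (cases "p = 0")
    case False
    hence "ln p \<le> 0" using p by simp
    hence "ln p / real n \<le> 0" by (simp add: divide_nonpos_nonneg)
    hence "0 \<le> - (1 / real n) * ln p" by simp
    thus ?thesis using False by (simp add: err_exp_def)
  qed (simp add: err_exp_def)
qed

lemma liminf_nonneg:
  assumes "\<And>n. 0 \<le> m n" "\<And>n. m n \<le> 1"
  shows "0 \<le> liminf (\<lambda>n. err_exp n (m n))"
proof -
  have "liminf (\<lambda>n. 0::ereal) \<le> liminf (\<lambda>n. err_exp n (m n))"
    by (intro Liminf_mono always_eventually allI err_nonneg assms)
  thus ?thesis by (simp add: Liminf_const)
qed

lemma liminf_lower:
  fixes m :: "nat \<Rightarrow> real" and c E p :: real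
  assumes m0: "\<And>n. 0 \<le> m n" and p: "0 < p"
    and ev: "eventually (\<lambda>n. m n \<le> exp (c - n * E) * p ^ n) sequentially"
  shows "ereal (E - ln p) \<le> liminf (\<lambda>n. err_exp n (m n))"
proof -
  define g where "g n = ereal (E - ln p - c / real n)" for n
  have gl: "g \<longlonglongrightarrow> ereal (E - ln p)"
  proof -
    have "(\<lambda>n. E - ln p - c / real n) \<longlonglongrightarrow> E - ln p - 0"
      by (intro tendsto_intros tendsto_divide_0[OF tendsto_const] filterlim_real_sequentially)
    thus ?thesis unfolding g_def by (simp add: tendsto_ereal)
  qed
  have "eventually (\<lambda>n. g n \<le> err_exp n (m n)) sequentially"
    using ev eventually_ge_at_top[of 1]
  proof eventually_elim
    case (elim n)
    show ?case
    proof (cases "m n = 0")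
      case True thus ?thesis by (simp add: err_exp_def)
    next
      case False
      hence mp: "0 < m n" using m0[of n] by simp
      have "ln (m n) \<le> ln (exp (c - n * E) * p ^ n)"
        using elim(1) mp p by (subst ln_le_cancel_iff) auto
      also have "\<dots> = c - n * E + n * ln p" using p by (simp add: ln_mult ln_realpow)
      finally have "ln (m n) \<le> c - n * E + n * ln p" .
      hence "- (1 / real n) * ln (m n) \<ge> - (1 / real n) * (c - n * E + n * ln p)"
        using elim(2) by (intro mult_left_mono_neg) auto
      also have "- (1 / real n) * (c - n * E + n * ln p) = E - ln p - c / real n"
        using elim(2) by (simp add: field_simps)
      finally show ?thesis using False by (simp add: err_exp_def g_def)
    qed
  qed
  hence "liminf g \<le> liminf (\<lambda>n. err_exp n (m n))" by (rule Liminf_mono)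
  moreover have "liminf g = ereal (E - ln p)" by (rule lim_imp_Liminf[OF _ gl]) simp
  ultimately show ?thesis by simp
qed

lemma liminf_upper:
  fixes m :: "nat \<Rightarrow> real" and E p0 a1 a2 :: real
  assumes m0: "\<And>n. 0 \<le> m n" and p0: "0 < p0"
    and a1: "0 \<le> a1" "a1 < p0" and a2: "0 \<le> a2" "a2 < p0"
    and ev: "eventually (\<lambda>n. p0 ^ n \<le> exp (n * E) * m n + a1 ^ n + a2 ^ n) sequentially"
  shows "liminf (\<lambda>n. err_exp n (m n)) \<le> ereal (E - ln p0)"
proof -
  have l1: "(\<lambda>n. (a1 / p0) ^ n) \<longlonglongrightarrow> 0" using a1 p0 by (intro LIMSEQ_power_zero) auto
  have l2: "(\<lambda>n. (a2 / p0) ^ n) \<longlonglongrightarrow> 0" using a2 p0 by (intro LIMSEQ_power_zero) auto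
  have e1: "eventually (\<lambda>n. (a1 / p0) ^ n < 1/4) sequentially" by (rule order_tendstoD(2)[OF l1]) simp
  have e2: "eventually (\<lambda>n. (a2 / p0) ^ n < 1/4) sequentially" by (rule order_tendstoD(2)[OF l2]) simp
  define g where "g n = ereal (E - ln p0 + ln 2 / real n)" for n
  have gl: "g \<longlonglongrightarrow> ereal (E - ln p0)"
  proof -
    have "(\<lambda>n. E - ln p0 + ln 2 / real n) \<longlonglongrightarrow> E - ln p0 + 0"
      by (intro tendsto_intros tendsto_divide_0[OF tendsto_const] filterlim_real_sequentially)
    thus ?thesis unfolding g_def by (simp add: tendsto_ereal)
  qed
  have "eventually (\<lambda>n. err_exp n (m n) \<le> g n) sequentially"
    using ev e1 e2 eventually_ge_at_top[of 1]
  proof eventually_elim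
    case (elim n)
    have pn: "0 < p0 ^ n" using p0 by simp
    have "a1 ^ n = (a1 / p0) ^ n * p0 ^ n" using p0 by (simp add: power_divide)
    also have "\<dots> \<le> 1/4 * p0 ^ n" using elim(2) pn by (intro mult_right_mono) auto
    finally have b1: "a1 ^ n \<le> 1/4 * p0 ^ n" .
    have "a2 ^ n = (a2 / p0) ^ n * p0 ^ n" using p0 by (simp add: power_divide)
    also have "\<dots> \<le> 1/4 * p0 ^ n" using elim(3) pn by (intro mult_right_mono) auto
    finally have b2: "a2 ^ n \<le> 1/4 * p0 ^ n" .
    have big: "p0 ^ n / 2 \<le> exp (n * E) * m n" using elim(1) b1 b2 by simp
    have mpos: "0 < m n"
    proof (rule ccontr)
      assume "\<not> 0 < m n"
      hence "m n = 0" using m0[of n] by simp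
      thus False using big pn by simp
    qed
    have "m n \<ge> p0 ^ n / 2 / exp (n * E)" using big by (simp add: pos_divide_le_eq mult.commute)
    hence "ln (m n) \<ge> ln (p0 ^ n / 2 / exp (n * E))"
      using pn mpos by (subst ln_le_cancel_iff) auto
    also have "ln (p0 ^ n / 2 / exp (n * E)) = n * ln p0 - ln 2 - n * E"
      using p0 by (simp add: ln_div ln_realpow ln_mult)
    finally have "n * ln p0 - ln 2 - n * E \<le> ln (m n)" .
    hence "- (1 / real n) * ln (m n) \<le> - (1 / real n) * (n * ln p0 - ln 2 - n * E)"
      using elim(4) by (intro mult_left_mono_neg) auto
    also have "\<dots> = E - ln p0 + ln 2 / real n" using elim(4) by (simp add: field_simps)
    finally show ?case using mpos by (simp add: err_exp_def g_def)
  qed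
  hence "liminf (\<lambda>n. err_exp n (m n)) \<le> liminf g" by (rule Liminf_mono)
  moreover have "liminf g = ereal (E - ln p0)" by (rule lim_imp_Liminf[OF _ gl]) simp
  ultimately show ?thesis by simp
qed


lemma endpoint:
  fixes Q :: "'b measure" and Y :: "'b \<Rightarrow> real"
  assumes Q: "prob_space Q" and Ym[measurable]: "Y \<in> borel_measurable Q" and iY: "integrable Q Y"
    and iB: "integrable Q (\<lambda>x. \<bar>Y x\<bar> * (1 + exp (Y x)))" and iE: "integrable Q (\<lambda>x. exp (Y x))"
    and c: "integral\<^sup>L Q Y < c"
  shows "\<exists>\<nu>>0. \<nu> \<le> 1 \<and> (\<integral>x. exp (\<nu> * Y x) \<partial>Q) < 1 + c * \<nu>"
proof -
  interpret prob_space Q by fact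
  define nu where "nu k = inverse (real (Suc k))" for k
  have nu: "0 < nu k" "nu k \<le> 1" for k by (auto simp: nu_def field_simps)
  define s where "s k x = (exp (nu k * Y x) - 1) / nu k" for k x
  have sm[measurable]: "s k \<in> borel_measurable Q" for k unfolding s_def by measurable
  have bound: "norm (s k x) \<le> \<bar>Y x\<bar> * (1 + exp (Y x))" for k x
  proof -
    have "\<bar>exp (nu k * Y x) - 1\<bar> \<le> nu k * \<bar>Y x\<bar> * (1 + exp (Y x))"
      using abs_exp_mult_1[OF less_imp_le[OF nu(1)] nu(2)] .
    thus ?thesis using nu(1)[of k] by (simp add: s_def abs_divide pos_divide_le_eq mult_ac)
  qed
  have lim: "(\<lambda>k. s k x) \<longlonglongrightarrow> Y x" for x
  proof -
    have nu0: "nu \<longlonglongrightarrow> 0" unfolding nu_def by (rule LIMSEQ_inverse_real_of_nat)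
    have b: "norm (s k x - Y x) \<le> nu k * ((Y x)\<^sup>2 * (1 + exp \<bar>Y x\<bar>))" for k
    proof -
      let ?t = "nu k * Y x"
      let ?A = "(Y x)\<^sup>2 * (1 + exp \<bar>Y x\<bar>)"
      have T: "0 \<le> exp ?t - 1 - ?t" "exp ?t - 1 - ?t \<le> ?t\<^sup>2 * (1 + exp \<bar>?t\<bar>)"
        using exp_taylor2[of ?t] by auto
      have at: "\<bar>?t\<bar> = nu k * \<bar>Y x\<bar>" using nu(1)[of k] by (simp add: abs_mult)
      have "nu k * \<bar>Y x\<bar> \<le> 1 * \<bar>Y x\<bar>" by (rule mult_right_mono) (use nu[of k] in auto)
      hence "exp \<bar>?t\<bar> \<le> exp \<bar>Y x\<bar>" using at by simp
      hence "?t\<^sup>2 * (1 + exp \<bar>?t\<bar>) \<le> ?t\<^sup>2 * (1 + exp \<bar>Y x\<bar>)" by (intro mult_left_mono) auto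
      also have "?t\<^sup>2 * (1 + exp \<bar>Y x\<bar>) = (nu k * ?A) * nu k" by (simp add: power2_eq_square)
      finally have T2: "exp ?t - 1 - ?t \<le> (nu k * ?A) * nu k" using T(2) by linarith
      have "s k x - Y x = (exp ?t - 1) / nu k - ?t / nu k" using nu(1)[of k] by (simp add: s_def)
      also have "\<dots> = (exp ?t - 1 - ?t) / nu k" by (simp add: diff_divide_distrib)
      finally have eq: "s k x - Y x = (exp ?t - 1 - ?t) / nu k" .
      have "(exp ?t - 1 - ?t) / nu k \<le> nu k * ?A"
        using T2 by (subst pos_divide_le_eq[OF nu(1)])
      moreover have "0 \<le> (exp ?t - 1 - ?t) / nu k" using T(1) nu(1)[of k] by simp
      ultimately show ?thesis using eq by simp
    qed
    have g0: "(\<lambda>k. nu k * ((Y x)\<^sup>2 * (1 + exp \<bar>Y x\<bar>))) \<longlonglongrightarrow> 0"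
      using tendsto_mult[OF nu0 tendsto_const, of "(Y x)\<^sup>2 * (1 + exp \<bar>Y x\<bar>)"] by simp
    have "(\<lambda>k. s k x - Y x) \<longlonglongrightarrow> 0"
      by (rule Lim_null_comparison[OF always_eventually[OF allI[OF b]] g0])
    thus ?thesis by (rule LIM_zero_cancel)
  qed
  have conv: "(\<lambda>k. integral\<^sup>L Q (s k)) \<longlonglongrightarrow> integral\<^sup>L Q Y"
    by (rule integral_dominated_convergence[OF Ym sm iB]) (use lim bound in auto)
  have sint: "integrable Q (s k)" for k
    by (rule integrable_dominated_convergence2[OF Ym sm iB]) (use lim bound in auto)
  from order_tendstoD(2)[OF conv c] obtain k where k: "integral\<^sup>L Q (s k) < c"
    by (auto simp: eventually_sequentially)
  have "(\<integral>x. exp (nu k * Y x) \<partial>Q) = (\<integral>x. 1 + nu k * s k x \<partial>Q)"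
    using nu(1)[of k] by (intro Bochner_Integration.integral_cong[OF refl]) (auto simp: s_def)
  also have "\<dots> = (\<integral>x. 1 \<partial>Q) + (\<integral>x. nu k * s k x \<partial>Q)"
    by (rule Bochner_Integration.integral_add) (use sint[of k] in auto)
  also have "\<dots> = 1 + nu k * integral\<^sup>L Q (s k)"
    using prob_space by simp
  also have "\<dots> < 1 + c * nu k" using k nu(1)[of k] by (simp add: mult.commute)
  finally show ?thesis using nu[of k] by blast
qed

locale setting =
  fixes M1 M2 :: "'a measure" and \<tau> :: real
  assumes P1: "prob_space M1" and P2: "prob_space M2" and sets12: "sets M1 = sets M2"
    and ac12: "absolutely_continuous M1 M2" and ac21: "absolutely_continuous M2 M1"
    and int1: "integrable M1 (llr M1 M2)" and int2: "integrable M2 (llr M2 M1)"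
    and K12pos: "0 < KL M1 M2" and K21pos: "0 < KL M2 M1"
    and tau1: "- KL M1 M2 < \<tau>" and tau2: "\<tau> < KL M2 M1"
begin

sublocale p1: prob_space M1 by (rule P1)
sublocale p2: prob_space M2 by (rule P2)

definition "L = llr M1 M2"
definition "Phi lm = (\<integral>\<^sup>+x. ennreal (exp (- lm * L x)) \<partial>M1)"
definition "Phir lm = enn2real (Phi lm)"
definition "phi lm = ln (Phir lm)"

lemma sets21: "sets M2 = sets M1" using sets12 by simp
lemma space12: "space M1 = space M2" using sets_eq_imp_space_eq[OF sets12] .

lemma Lm2[measurable]: "L \<in> borel_measurable M2" unfolding L_def by (rule llr_measurable)
lemma Lm1[measurable]: "L \<in> borel_measurable M1"
  by (subst measurable_cong_sets[OF sets12 refl]) (rule Lm2)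

lemma llr21m[measurable]: "llr M2 M1 \<in> borel_measurable M2"
  by (subst measurable_cong_sets[OF sets21 refl]) (rule llr_measurable)

lemma meas12: "f \<in> borel_measurable M1 \<Longrightarrow> f \<in> borel_measurable M2"
  by (subst measurable_cong_sets[OF sets21 refl])

lemma rninv: "AE x in M1. RN_deriv M1 M2 x = ennreal (exp (- L x))"
  unfolding L_def by (rule rn_inverse[OF P1 P2 sets12 ac12 ac21])

lemma CM:
  assumes F[measurable]: "F \<in> borel_measurable M1"
  shows "(\<integral>\<^sup>+x. F x \<partial>M2) = (\<integral>\<^sup>+x. ennreal (exp (- L x)) * F x \<partial>M1)"
proof -
  have "(\<integral>\<^sup>+x. F x \<partial>M2) = (\<integral>\<^sup>+x. RN_deriv M1 M2 x * F x \<partial>M1)"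
    by (rule p1.RN_deriv_nn_integral[OF ac12 sets21 F])
  also have "\<dots> = (\<integral>\<^sup>+x. ennreal (exp (- L x)) * F x \<partial>M1)"
    using rninv by (intro nn_integral_cong_AE) auto
  finally show ?thesis .
qed

lemma K2: "AE x in M2. llr M2 M1 x = - L x"
proof -
  have "AE x in M2. RN_deriv M1 M2 x = ennreal (exp (- L x))"
    by (rule absolutely_continuous_AE[OF sets21 ac12 rninv])
  thus ?thesis by eventually_elim (simp add: llr_def)
qed

lemma intL1: "integrable M1 L" using int1 by (simp add: L_def)
lemma intL2: "integrable M2 L"
proof -
  have "integrable M2 (\<lambda>x. - L x)"
    using int2 K2 by (subst integrable_cong_AE[of _ _ "llr M2 M1"]) (auto simp: L_def)
  thus ?thesis by simp
qed
lemma EL1: "integral\<^sup>L M1 L = KL M1 M2" by (simp add: KL_def L_def)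
lemma EL2: "integral\<^sup>L M2 L = - KL M2 M1"
proof -
  have "KL M2 M1 = integral\<^sup>L M2 (\<lambda>x. - L x)"
    unfolding KL_def using K2 by (intro integral_cong_AE) (auto simp: L_def)
  thus ?thesis by simp
qed

lemma Phi_shift: "(\<integral>\<^sup>+x. ennreal (exp (mu * L x)) \<partial>M2) = Phi (1 - mu)"
proof -
  have "(\<integral>\<^sup>+x. ennreal (exp (mu * L x)) \<partial>M2) = (\<integral>\<^sup>+x. ennreal (exp (- L x)) * ennreal (exp (mu * L x)) \<partial>M1)"
    by (rule CM) measurable
  also have "\<dots> = Phi (1 - mu)" unfolding Phi_def
    by (intro nn_integral_cong) (simp add: ennreal_mult[symmetric] exp_add[symmetric] algebra_simps)
  finally show ?thesis .
qed

lemma Phi1: "Phi 1 = 1"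
  using Phi_shift[of 0] p2.emeasure_space_1 by simp

lemma Phi0: "Phi 0 = 1" using p1.emeasure_space_1 by (simp add: Phi_def)

lemma exp_int1: "integrable M1 (\<lambda>x. exp (- L x))"
  using Phi1 by (intro integrableI_nn_integral_finite[where x=1]) (auto simp: Phi_def)

lemma Phi_le: "0 \<le> lm \<Longrightarrow> lm \<le> 1 \<Longrightarrow> Phi lm \<le> 2"
proof -
  assume l: "0 \<le> lm" "lm \<le> 1"
  have "Phi lm \<le> (\<integral>\<^sup>+x. ennreal 1 + ennreal (exp (- L x)) \<partial>M1)"
    unfolding Phi_def
  proof (intro nn_integral_mono)
    fix x have "exp (lm * (- L x)) \<le> 1 + exp (- L x)" by (rule exp_mult_le[OF l])
    hence "ennreal (exp (- lm * L x)) \<le> ennreal (1 + exp (- L x))" by (intro ennreal_leI) simp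
    thus "ennreal (exp (- lm * L x)) \<le> ennreal 1 + ennreal (exp (- L x))"
      by (simp add: ennreal_plus)
  qed
  also have "\<dots> = 2" using Phi1 p1.emeasure_space_1
    by (simp add: nn_integral_add Phi_def one_add_one[symmetric] del: one_add_one)
  finally show ?thesis .
qed

lemma exp_int: "0 \<le> lm \<Longrightarrow> lm \<le> 1 \<Longrightarrow> integrable M1 (\<lambda>x. exp (- lm * L x))"
proof -
  assume l: "0 \<le> lm" "lm \<le> 1"
  show ?thesis
  proof (rule Bochner_Integration.integrable_bound[where f="\<lambda>x. 1 + exp (- L x)"])
    show "integrable M1 (\<lambda>x. 1 + exp (- L x))" using exp_int1 by simp
    show "AE x in M1. norm (exp (- lm * L x)) \<le> norm (1 + exp (- L x))"
      using exp_mult_le[OF l, of "- L _"] by (auto intro!: AE_I2 simp: add_pos_pos)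
  qed measurable
qed

lemma Phir_int: "0 \<le> lm \<Longrightarrow> lm \<le> 1 \<Longrightarrow> Phir lm = (\<integral>x. exp (- lm * L x) \<partial>M1)"
  unfolding Phir_def Phi_def by (subst integral_eq_nn_integral) auto

lemma Phi_pos: "0 < Phi lm"
proof -
  have "Phi lm \<noteq> 0"
  proof
    assume "Phi lm = 0"
    hence "AE x in M1. ennreal (exp (- lm * L x)) = 0"
      unfolding Phi_def by (subst (asm) nn_integral_0_iff_AE) auto
    hence "AE x in M1. False" by simp
    thus False by simp
  qed
  thus ?thesis by (simp add: zero_less_iff_neq_zero)
qed

lemma Phi_eq: "0 \<le> lm \<Longrightarrow> lm \<le> 1 \<Longrightarrow> Phi lm = ennreal (Phir lm)"
proof -
  assume "0 \<le> lm" "lm \<le> 1"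
  hence "Phi lm \<le> 2" by (rule Phi_le)
  hence "Phi lm \<noteq> \<top>" using ennreal_numeral_less_top[of "num.Bit0 num.One"] by (auto simp: top_unique)
  thus ?thesis unfolding Phir_def by (simp add: ennreal_enn2real_if)
qed

lemma Phir_pos: "0 \<le> lm \<Longrightarrow> lm \<le> 1 \<Longrightarrow> 0 < Phir lm"
  using Phi_pos[of lm] Phi_eq[of lm] by simp

lemma Phir1: "Phir 1 = 1" and Phir0: "Phir 0 = 1"
  by (simp_all add: Phir_def Phi1 Phi0)


lemma intabsL1: "integrable M1 (\<lambda>x. \<bar>L x\<bar>)" using intL1 by simp
lemma intabsL2: "integrable M2 (\<lambda>x. \<bar>L x\<bar>)" using intL2 by simp

lemma intLe: "integrable M1 (\<lambda>x. \<bar>L x\<bar> * exp (- L x))"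
proof (rule integrableI_nonneg)
  have "(\<integral>\<^sup>+x. ennreal (\<bar>L x\<bar> * exp (- L x)) \<partial>M1) = (\<integral>\<^sup>+x. ennreal (exp (- L x)) * ennreal \<bar>L x\<bar> \<partial>M1)"
    by (intro nn_integral_cong) (simp add: ennreal_mult[symmetric] mult.commute)
  also have "\<dots> = (\<integral>\<^sup>+x. ennreal \<bar>L x\<bar> \<partial>M2)" by (rule CM[symmetric]) measurable
  also have "\<dots> = ennreal (\<integral>x. \<bar>L x\<bar> \<partial>M2)" by (rule nn_integral_eq_integral[OF intabsL2]) auto
  finally show "(\<integral>\<^sup>+x. ennreal (\<bar>L x\<bar> * exp (- L x)) \<partial>M1) < \<infinity>" by simp
qed auto

lemma intLe2: "integrable M2 (\<lambda>x. \<bar>L x\<bar> * exp (L x))"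
proof (rule integrableI_nonneg)
  have "(\<integral>\<^sup>+x. ennreal (\<bar>L x\<bar> * exp (L x)) \<partial>M2) = (\<integral>\<^sup>+x. ennreal (exp (- L x)) * ennreal (\<bar>L x\<bar> * exp (L x)) \<partial>M1)"
    by (rule CM) measurable
  also have "\<dots> = (\<integral>\<^sup>+x. ennreal \<bar>L x\<bar> \<partial>M1)"
    by (intro nn_integral_cong) (simp add: ennreal_mult[symmetric] exp_minus field_simps)
  also have "\<dots> = ennreal (\<integral>x. \<bar>L x\<bar> \<partial>M1)" by (rule nn_integral_eq_integral[OF intabsL1]) auto
  finally show "(\<integral>\<^sup>+x. ennreal (\<bar>L x\<bar> * exp (L x)) \<partial>M2) < \<infinity>" by simp
qed auto

lemma expL2: "integrable M2 (\<lambda>x. exp (L x))"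
  using Phi_shift[of 1] Phi0 by (intro integrableI_nn_integral_finite[where x=1]) auto

definition "K0 = (\<integral>x. \<bar>L x\<bar> * (1 + exp (- L x)) \<partial>M1)"

lemma intK0: "integrable M1 (\<lambda>x. \<bar>L x\<bar> * (1 + exp (- L x)))"
  using intabsL1 intLe by (simp add: distrib_left)

lemma K0_nn: "0 \<le> K0" unfolding K0_def by (rule integral_nonneg_AE) auto

lemma Phir_lip:
  assumes "0 \<le> a" "a \<le> 1" "0 \<le> b" "b \<le> 1"
  shows "\<bar>Phir a - Phir b\<bar> \<le> K0 * \<bar>a - b\<bar>"
proof -
  have i1: "integrable M1 (\<lambda>x. exp (- a * L x))" using exp_int assms by auto
  have i2: "integrable M1 (\<lambda>x. exp (- b * L x))" using exp_int assms by auto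
  have "Phir a - Phir b = (\<integral>x. exp (- a * L x) - exp (- b * L x) \<partial>M1)"
    using Bochner_Integration.integral_diff[OF i1 i2] Phir_int[of a] Phir_int[of b] assms by simp
  also have "\<bar>\<dots>\<bar> \<le> (\<integral>x. \<bar>a - b\<bar> * (\<bar>L x\<bar> * (1 + exp (- L x))) \<partial>M1)"
  proof -
    have pw: "\<bar>exp (- a * L x) - exp (- b * L x)\<bar> \<le> \<bar>a - b\<bar> * (\<bar>L x\<bar> * (1 + exp (- L x)))" for x
    proof -
      have "\<bar>exp (- a * L x) - exp (- b * L x)\<bar> \<le> \<bar>- a * L x - - b * L x\<bar> * max (exp (- a * L x)) (exp (- b * L x))"
        by (rule abs_exp_diff)
      also have "\<dots> \<le> \<bar>a - b\<bar> * \<bar>L x\<bar> * (1 + exp (- L x))"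
      proof -
        have "exp (a * (- L x)) \<le> 1 + exp (- L x)" "exp (b * (- L x)) \<le> 1 + exp (- L x)"
          using exp_mult_le[of a "- L x"] exp_mult_le[of b "- L x"] assms by auto
        hence m: "max (exp (- a * L x)) (exp (- b * L x)) \<le> 1 + exp (- L x)" by simp
        have "\<bar>- a * L x - - b * L x\<bar> = \<bar>a - b\<bar> * \<bar>L x\<bar>" by (simp add: abs_mult[symmetric] algebra_simps)
        thus ?thesis using mult_left_mono[OF m, of "\<bar>a - b\<bar> * \<bar>L x\<bar>"] by simp
      qed
      finally show ?thesis by (simp add: mult.assoc)
    qed
    have "norm (\<integral>x. exp (- a * L x) - exp (- b * L x) \<partial>M1) \<le> (\<integral>x. norm (exp (- a * L x) - exp (- b * L x)) \<partial>M1)"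
      by (rule integral_norm_bound)
    also have "\<dots> \<le> (\<integral>x. \<bar>a - b\<bar> * (\<bar>L x\<bar> * (1 + exp (- L x))) \<partial>M1)"
      by (rule integral_mono) (use i1 i2 intK0 pw in auto)
    finally show ?thesis by simp
  qed
  also have "\<dots> = K0 * \<bar>a - b\<bar>" by (simp add: K0_def mult.commute)
  finally show ?thesis .
qed

lemma Phir_cont: "continuous_on {0..1} Phir"
proof (rule lipschitz_on_continuous_on)
  show "K0-lipschitz_on {0..1} Phir"
    using Phir_lip K0_nn by (auto simp: lipschitz_on_def dist_real_def)
qed

lemma phi_cont: "continuous_on {0..1} phi"
  unfolding phi_def by (intro continuous_intros Phir_cont) (use Phir_pos in fastforce)

lemma phi0: "phi 0 = 0" and phi1: "phi 1 = 0" by (simp_all add: phi_def Phir0 Phir1)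

lemma exp_phi: "0 \<le> lm \<Longrightarrow> lm \<le> 1 \<Longrightarrow> exp (phi lm) = Phir lm"
  by (simp add: phi_def Phir_pos)

lemma end0: assumes "- KL M1 M2 < c" shows "\<exists>\<nu>>0. \<nu> \<le> 1 \<and> phi \<nu> < c * \<nu>"
proof -
  have "\<exists>\<nu>>0. \<nu> \<le> 1 \<and> (\<integral>x. exp (\<nu> * (- L x)) \<partial>M1) < 1 + c * \<nu>"
  proof (rule endpoint[OF P1])
    show "integrable M1 (\<lambda>x. - L x)" using intL1 by simp
    show "integrable M1 (\<lambda>x. \<bar>- L x\<bar> * (1 + exp (- L x)))" using intK0 by simp
    show "integrable M1 (\<lambda>x. exp (- L x))" by (rule exp_int1)
    show "integral\<^sup>L M1 (\<lambda>x. - L x) < c" using assms EL1 by simp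
  qed measurable
  then obtain \<nu> where n: "\<nu> > 0" "\<nu> \<le> 1" "(\<integral>x. exp (\<nu> * (- L x)) \<partial>M1) < 1 + c * \<nu>" by blast
  have "Phir \<nu> < 1 + c * \<nu>" using n by (simp add: Phir_int)
  moreover have "phi \<nu> \<le> Phir \<nu> - 1" unfolding phi_def by (rule ln_le_minus_one) (use n Phir_pos in auto)
  ultimately show ?thesis using n by (intro exI[of _ \<nu>]) auto
qed

lemma end1: assumes "c < KL M2 M1" shows "\<exists>\<nu>>0. \<nu> \<le> 1 \<and> phi (1 - \<nu>) < - c * \<nu>"
proof -
  have "\<exists>\<nu>>0. \<nu> \<le> 1 \<and> (\<integral>x. exp (\<nu> * L x) \<partial>M2) < 1 + (- c) * \<nu>"
  proof (rule endpoint[OF P2 Lm2 intL2])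
    show "integrable M2 (\<lambda>x. \<bar>L x\<bar> * (1 + exp (L x)))" using intabsL2 intLe2 by (simp add: distrib_left)
    show "integrable M2 (\<lambda>x. exp (L x))" by (rule expL2)
    show "integral\<^sup>L M2 L < - c" using assms EL2 by simp
  qed
  then obtain \<nu> where n: "\<nu> > 0" "\<nu> \<le> 1" "(\<integral>x. exp (\<nu> * L x) \<partial>M2) < 1 + (- c) * \<nu>" by blast
  have "Phir (1 - \<nu>) = (\<integral>x. exp (\<nu> * L x) \<partial>M2)"
    unfolding Phir_def Phi_shift[symmetric] by (subst integral_eq_nn_integral) auto
  hence "Phir (1 - \<nu>) < 1 - c * \<nu>" using n by simp
  moreover have "phi (1 - \<nu>) \<le> Phir (1 - \<nu>) - 1" unfolding phi_def by (rule ln_le_minus_one) (use n Phir_pos in auto)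
  ultimately show ?thesis using n by (intro exI[of _ \<nu>]) auto
qed


lemma second_diff:
  assumes e: "0 < \<epsilon>" and h: "0 \<le> h" and lo: "\<epsilon> \<le> \<mu> - h" and hi: "\<mu> + h \<le> 1 - \<epsilon>"
  shows "Phir (\<mu> + h) + Phir (\<mu> - h) \<le> 2 * Phir \<mu> + h\<^sup>2 * (8 / \<epsilon>\<^sup>2) * 2"
proof -
  define C where "C = h\<^sup>2 * (8 / \<epsilon>\<^sup>2)"
  have r: "0 \<le> \<mu> - h" "\<mu> + h \<le> 1" "0 \<le> \<mu>" "\<mu> \<le> 1" "0 \<le> \<mu> + h" "\<mu> - h \<le> 1" using e h lo hi by auto
  have pw: "exp (- (\<mu> + h) * L x) + exp (- (\<mu> - h) * L x) \<le> 2 * exp (- \<mu> * L x) + C * (1 + exp (- L x))" for x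
  proof -
    let ?b = "h * L x"
    have e1: "exp (- (\<mu> + h) * L x) = exp (- \<mu> * L x) * exp (- ?b)"
      by (simp add: exp_add[symmetric] algebra_simps)
    have e2: "exp (- (\<mu> - h) * L x) = exp (- \<mu> * L x) * exp ?b"
      by (simp add: exp_add[symmetric] algebra_simps)
    have cb: "exp ?b + exp (- ?b) - 2 \<le> ?b\<^sup>2 * exp \<bar>?b\<bar>" by (rule cosh_bound)
    have "exp (- \<mu> * L x) * (exp ?b + exp (- ?b) - 2) \<le> exp (- \<mu> * L x) * (?b\<^sup>2 * exp \<bar>?b\<bar>)"
      by (rule mult_left_mono[OF cb]) simp
    also have "\<dots> = h\<^sup>2 * ((L x)\<^sup>2 * exp (- \<mu> * L x + \<bar>?b\<bar>))"
    proof -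
      have "exp (- \<mu> * L x + \<bar>?b\<bar>) = exp (- \<mu> * L x) * exp \<bar>?b\<bar>" by (rule exp_add)
      thus ?thesis by (simp only: power_mult_distrib mult_ac)
    qed
    also have "\<dots> \<le> h\<^sup>2 * ((L x)\<^sup>2 * exp (- (\<mu> - h) * L x) + (L x)\<^sup>2 * exp (- (\<mu> + h) * L x))"
    proof (rule mult_left_mono)
      have "exp (- \<mu> * L x + \<bar>?b\<bar>) \<le> exp (- (\<mu> - h) * L x) + exp (- (\<mu> + h) * L x)"
      proof (cases "L x \<ge> 0")
        case True
        hence "- \<mu> * L x + \<bar>?b\<bar> = - (\<mu> - h) * L x" using h by (simp add: abs_mult algebra_simps)
        thus ?thesis by simp
      next
        case False
        hence "- \<mu> * L x + \<bar>?b\<bar> = - (\<mu> + h) * L x" using h by (simp add: abs_mult algebra_simps)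
        thus ?thesis by simp
      qed
      thus "(L x)\<^sup>2 * exp (- \<mu> * L x + \<bar>?b\<bar>) \<le> (L x)\<^sup>2 * exp (- (\<mu> - h) * L x) + (L x)\<^sup>2 * exp (- (\<mu> + h) * L x)"
        by (simp add: distrib_left[symmetric] mult_left_mono)
    qed simp
    also have "\<dots> \<le> h\<^sup>2 * ((4 / \<epsilon>\<^sup>2) * (1 + exp (- L x)) + (4 / \<epsilon>\<^sup>2) * (1 + exp (- L x)))"
    proof (rule mult_left_mono)
      have "(L x)\<^sup>2 * exp (- (\<mu> - h) * L x) \<le> (4 / \<epsilon>\<^sup>2) * (1 + exp (- L x))"
        by (rule sq_exp_bound[OF e]) (use lo hi h in auto)
      moreover have "(L x)\<^sup>2 * exp (- (\<mu> + h) * L x) \<le> (4 / \<epsilon>\<^sup>2) * (1 + exp (- L x))"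
        by (rule sq_exp_bound[OF e]) (use lo hi h in auto)
      ultimately show "(L x)\<^sup>2 * exp (- (\<mu> - h) * L x) + (L x)\<^sup>2 * exp (- (\<mu> + h) * L x)
          \<le> (4 / \<epsilon>\<^sup>2) * (1 + exp (- L x)) + (4 / \<epsilon>\<^sup>2) * (1 + exp (- L x))" by linarith
    qed simp
    also have "\<dots> = C * (1 + exp (- L x))" by (simp add: C_def algebra_simps)
    finally have "exp (- \<mu> * L x) * (exp ?b + exp (- ?b) - 2) \<le> C * (1 + exp (- L x))" .
    thus ?thesis unfolding e1 e2 by (simp add: algebra_simps)
  qed
  have i1: "integrable M1 (\<lambda>x. exp (- (\<mu> + h) * L x))" by (rule exp_int) (use r in auto)
  have i2: "integrable M1 (\<lambda>x. exp (- (\<mu> - h) * L x))" by (rule exp_int) (use r in auto)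
  have i3: "integrable M1 (\<lambda>x. exp (- \<mu> * L x))" by (rule exp_int) (use r in auto)
  have i4: "integrable M1 (\<lambda>x. 1 + exp (- L x))" using exp_int1 by simp
  have "Phir (\<mu> + h) + Phir (\<mu> - h) = (\<integral>x. exp (- (\<mu> + h) * L x) + exp (- (\<mu> - h) * L x) \<partial>M1)"
    using Phir_int[of "\<mu> + h"] Phir_int[of "\<mu> - h"] r Bochner_Integration.integral_add[OF i1 i2] by simp
  also have "\<dots> \<le> (\<integral>x. 2 * exp (- \<mu> * L x) + C * (1 + exp (- L x)) \<partial>M1)"
    by (rule integral_mono) (use i1 i2 i3 i4 pw in auto)
  also have "\<dots> = 2 * Phir \<mu> + C * (1 + Phir 1)"
  proof -
    have "(\<integral>x. 2 * exp (- \<mu> * L x) + C * (1 + exp (- L x)) \<partial>M1)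
        = (\<integral>x. 2 * exp (- \<mu> * L x) \<partial>M1) + (\<integral>x. C * (1 + exp (- L x)) \<partial>M1)"
      by (rule Bochner_Integration.integral_add) (use i3 i4 in auto)
    also have "(\<integral>x. C * (1 + exp (- L x)) \<partial>M1) = C * ((\<integral>x. 1 \<partial>M1) + (\<integral>x. exp (- L x) \<partial>M1))"
      using Bochner_Integration.integral_add[of M1 "\<lambda>_. 1" "\<lambda>x. exp (- L x)"] exp_int1 by simp
    finally show ?thesis using Phir_int[of \<mu>] Phir_int[of 1] r p1.prob_space by simp
  qed
  finally show ?thesis by (simp add: Phir1 C_def)
qed

lemma argmax:
  assumes "- KL M1 M2 < c" "c < KL M2 M1"
  shows "\<exists>\<mu>. 0 < \<mu> \<and> \<mu> < 1 \<and> (\<forall>y\<in>{0..1}. c * y - phi y \<le> c * \<mu> - phi \<mu>)"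
proof -
  have "\<exists>\<mu>\<in>{0..1}. \<forall>y\<in>{0..1}. c * y - phi y \<le> c * \<mu> - phi \<mu>"
    by (rule continuous_attains_sup) (auto intro!: continuous_intros phi_cont)
  then obtain \<mu> where m: "\<mu> \<in> {0..1}" "\<forall>y\<in>{0..1}. c * y - phi y \<le> c * \<mu> - phi \<mu>" by blast
  have "\<mu> \<noteq> 0"
  proof
    assume "\<mu> = 0"
    obtain \<nu> where n: "\<nu> > 0" "\<nu> \<le> 1" "phi \<nu> < c * \<nu>" using end0[OF assms(1)] by blast
    have "c * \<nu> - phi \<nu> \<le> c * 0 - phi 0" using m(2) n \<open>\<mu> = 0\<close> by auto
    thus False using n phi0 by simp
  qed
  moreover have "\<mu> \<noteq> 1"
  proof
    assume "\<mu> = 1"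
    obtain \<nu> where n: "\<nu> > 0" "\<nu> \<le> 1" "phi (1 - \<nu>) < - c * \<nu>" using end1[OF assms(2)] by blast
    have "c * (1 - \<nu>) - phi (1 - \<nu>) \<le> c * 1 - phi 1" using m(2) n \<open>\<mu> = 1\<close> by auto
    thus False using n phi1 by (simp add: algebra_simps)
  qed
  ultimately show ?thesis using m by (intro exI[of _ \<mu>]) auto
qed

lemma good_point:
  assumes c1: "- KL M1 M2 < C1" and c12: "C1 < C2" and c2: "C2 < KL M2 M1"
  shows "\<exists>\<mu> s s'. 0 < \<mu> \<and> \<mu> < 1 \<and> 0 < s \<and> 0 < s' \<and> \<mu> + s \<le> 1 \<and> 0 \<le> \<mu> - s'
     \<and> Phir (\<mu> + s) < Phir \<mu> * exp (s * C2) \<and> Phir (\<mu> - s') < Phir \<mu> * exp (- s' * C1)"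
proof -
  define A where "A = (2 * C1 + C2) / 3"
  define B where "B = (C1 + 2 * C2) / 3"
  have AB: "C1 < A" "A < B" "B < C2" using c12 by (auto simp: A_def B_def)
  obtain m1 where m1: "0 < m1" "m1 < 1" "\<forall>y\<in>{0..1}. A * y - phi y \<le> A * m1 - phi m1"
    using argmax[of A] c1 c2 AB by auto
  obtain m2 where m2: "0 < m2" "m2 < 1" "\<forall>y\<in>{0..1}. B * y - phi y \<le> B * m2 - phi m2"
    using argmax[of B] c1 c2 AB by auto
  have ep: "exp (phi y) = Phir y" if "0 \<le> y" "y \<le> 1" for y using exp_phi that .
  have le: "m1 \<le> m2"
  proof (rule ccontr)
    assume "\<not> m1 \<le> m2"
    hence lt: "m2 < m1" by simp
    have "A * m2 - phi m2 \<le> A * m1 - phi m1" using m1(3) m2 by auto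
    moreover have "B * m1 - phi m1 \<le> B * m2 - phi m2" using m2(3) m1 by auto
    ultimately have "(B - A) * (m1 - m2) \<le> 0" by (simp add: algebra_simps)
    moreover have "0 < (B - A) * (m1 - m2)" using AB lt by simp
    ultimately show False by simp
  qed
  show ?thesis
  proof (cases "m1 < m2")
    case True
    define \<mu> where "\<mu> = (m1 + m2) / 2"
    have mu: "m1 < \<mu>" "\<mu> < m2" "0 < \<mu>" "\<mu> < 1" using True m1 m2 by (auto simp: \<mu>_def)
    have a: "phi m1 \<le> phi \<mu> - A * (\<mu> - m1)" using m1(3) mu by (auto simp: algebra_simps)
    have b: "phi m2 \<le> phi \<mu> + B * (m2 - \<mu>)" using m2(3) mu by (auto simp: algebra_simps)
    have "Phir (\<mu> + (m2 - \<mu>)) = exp (phi m2)" using ep m2 by simp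
    also have "\<dots> \<le> exp (phi \<mu> + B * (m2 - \<mu>))" using b by simp
    also have "\<dots> < exp (phi \<mu> + (m2 - \<mu>) * C2)" using AB mu by simp
    also have "\<dots> = Phir \<mu> * exp ((m2 - \<mu>) * C2)" using ep[of \<mu>] mu by (simp add: exp_add)
    finally have s1: "Phir (\<mu> + (m2 - \<mu>)) < Phir \<mu> * exp ((m2 - \<mu>) * C2)" .
    have "Phir (\<mu> - (\<mu> - m1)) = exp (phi m1)" using ep m1 by simp
    also have "\<dots> \<le> exp (phi \<mu> - A * (\<mu> - m1))" using a by simp
    also have "\<dots> < exp (phi \<mu> + - (\<mu> - m1) * C1)"
    proof -
      have "C1 * (\<mu> - m1) < A * (\<mu> - m1)" using AB mu by (intro mult_strict_right_mono) auto
      thus ?thesis by (simp add: algebra_simps)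
    qed
    also have "\<dots> = Phir \<mu> * exp (- (\<mu> - m1) * C1)" using ep[of \<mu>] mu by (simp add: exp_add)
    finally have s2: "Phir (\<mu> - (\<mu> - m1)) < Phir \<mu> * exp (- (\<mu> - m1) * C1)" .
    show ?thesis
      by (rule exI[of _ \<mu>], rule exI[of _ "m2 - \<mu>"], rule exI[of _ "\<mu> - m1"]) (use mu m1 m2 s1 s2 in auto)
  next
    case False
    hence eq: "m1 = m2" using le by simp
    define \<mu> where "\<mu> = m1"
    define \<epsilon> where "\<epsilon> = min \<mu> (1 - \<mu>) / 2"
    have e: "0 < \<epsilon>" "2 * \<epsilon> \<le> \<mu>" "2 * \<epsilon> \<le> 1 - \<mu>" using m1 by (auto simp: \<epsilon>_def \<mu>_def)
    define K where "K = (8 / \<epsilon>\<^sup>2) * 2"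
    have Kp: "0 < K" using e by (simp add: K_def)
    have Pp: "0 < Phir \<mu>" using Phir_pos m1 by (simp add: \<mu>_def)
    define h where "h = min \<epsilon> (Phir \<mu> * (B - A) / (2 * K))"
    have hp: "0 < h" using e Pp AB Kp by (auto simp: h_def)
    have he: "h \<le> \<epsilon>" and hK: "h \<le> Phir \<mu> * (B - A) / (2 * K)" by (auto simp: h_def)
    have c1: "\<epsilon> \<le> \<mu> - h" "\<mu> + h \<le> 1 - \<epsilon>" using e he by auto
    have "Phir (\<mu> + h) + Phir (\<mu> - h) \<le> 2 * Phir \<mu> + h\<^sup>2 * (8 / \<epsilon>\<^sup>2) * 2"
      by (rule second_diff[OF e(1) less_imp_le[OF hp] c1])
    hence sd: "Phir (\<mu> + h) + Phir (\<mu> - h) \<le> 2 * Phir \<mu> + h\<^sup>2 * K"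
      by (simp only: K_def mult.assoc)
    have up: "phi (\<mu> + h) \<ge> phi \<mu> + B * h" using m2(3)[rule_format, of "\<mu> + h"] e he eq hp
      by (auto simp: \<mu>_def algebra_simps)
    have dn: "phi (\<mu> - h) \<ge> phi \<mu> - A * h" using m1(3)[rule_format, of "\<mu> - h"] e he hp
      by (auto simp: \<mu>_def algebra_simps)
    have "Phir (\<mu> + h) = exp (phi (\<mu> + h))" using ep[of "\<mu> + h"] e he hp by simp
    also have "\<dots> \<ge> exp (phi \<mu> + B * h)" using up by simp
    finally have u2: "Phir (\<mu> + h) \<ge> Phir \<mu> * exp (B * h)"
      using ep[of \<mu>] m1 by (simp add: exp_add \<mu>_def)
    have "Phir (\<mu> - h) = exp (phi (\<mu> - h))" using ep[of "\<mu> - h"] e he hp by simp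
    also have "\<dots> \<ge> exp (phi \<mu> - A * h)" using dn by simp
    finally have d2: "Phir (\<mu> - h) \<ge> Phir \<mu> * exp (- (A * h))"
      using ep[of \<mu>] m1 by (simp add: exp_diff exp_minus \<mu>_def field_simps)
    have "Phir \<mu> * exp (B * h) \<ge> Phir \<mu> * (1 + B * h)"
      using Pp exp_ge_add_one_self[of "B * h"] by (intro mult_left_mono) auto
    moreover have "Phir \<mu> * exp (- (A * h)) \<ge> Phir \<mu> * (1 + - (A * h))"
      using Pp exp_ge_add_one_self[of "- (A * h)"] by (intro mult_left_mono) auto
    ultimately have "Phir (\<mu> + h) + Phir (\<mu> - h) \<ge> Phir \<mu> * (2 + (B - A) * h)"
      using u2 d2 by (simp add: algebra_simps)
    with sd have "Phir \<mu> * ((B - A) * h) \<le> h\<^sup>2 * K" by (simp add: algebra_simps)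
    hence "Phir \<mu> * (B - A) * h \<le> (h * K) * h" by (simp add: power2_eq_square mult_ac)
    hence "Phir \<mu> * (B - A) \<le> h * K" using hp by (simp add: mult.commute)
    moreover have "h * K \<le> Phir \<mu> * (B - A) / 2" using hK Kp by (simp add: field_simps)
    moreover have "0 < Phir \<mu> * (B - A)" using Pp AB by simp
    ultimately show ?thesis by simp
  qed
qed

end

lemma bq_step_fst: "fst (bq_step n E a D d \<rho> r s) i =
   (\<rho> * real (card (nbrs n E i)) * quant a D d (fst s i) + \<rho> * (\<Sum>j\<in>nbrs n E i. quant a D d (fst s j))
     - snd s i + r i) / (1 + 2 * \<rho> * real (card (nbrs n E i)))"
  by (simp add: bq_step_def Let_def)

lemma bq_step_snd: "snd (bq_step n E a D d \<rho> r s) i =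
   snd s i + \<rho> * (real (card (nbrs n E i)) * quant a D d (fst (bq_step n E a D d \<rho> r s) i)
     - (\<Sum>j\<in>nbrs n E i. quant a D d (fst (bq_step n E a D d \<rho> r s) j)))"
  by (simp add: bq_step_def Let_def)

lemma quant_meas[measurable]: "g \<in> borel_measurable M \<Longrightarrow> (\<lambda>y. quant a D d (g y)) \<in> borel_measurable M"
  unfolding quant_def by measurable

lemma comp_meas:
  assumes f[measurable]: "f \<in> borel_measurable M"
  shows "(\<lambda>y. f (y i)) \<in> borel_measurable (PiM {1..n} (\<lambda>_. M))"
proof (cases "i \<in> {1..n}")
  case True then show ?thesis by measurable
next
  case False
  have "(\<lambda>y. f (y i)) \<in> borel_measurable (PiM {1..n} (\<lambda>_. M)) \<longleftrightarrow> (\<lambda>_. f undefined) \<in> borel_measurable (PiM {1..n} (\<lambda>_. M))"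
    by (rule measurable_cong) (use False in \<open>auto simp: space_PiM PiE_def extensional_def\<close>)
  thus ?thesis by simp
qed

lemma bq_meas:
  assumes f[measurable]: "f \<in> borel_measurable M"
  shows "\<forall>i. (\<lambda>y. fst (bq_iter n E a D d \<rho> (\<lambda>i. f (y i)) k) i) \<in> borel_measurable (PiM {1..n} (\<lambda>_. M))
            \<and> (\<lambda>y. snd (bq_iter n E a D d \<rho> (\<lambda>i. f (y i)) k) i) \<in> borel_measurable (PiM {1..n} (\<lambda>_. M))"
proof (induction k)
  case 0 then show ?case by (simp add: bq_iter_def)
next
  case (Suc k)
  let ?P = "PiM {1..n} (\<lambda>_. M)"
  let ?s = "\<lambda>y. bq_iter n E a D d \<rho> (\<lambda>i. f (y i)) k"
  have it: "bq_iter n E a D d \<rho> r (Suc k) = bq_step n E a D d \<rho> r (bq_iter n E a D d \<rho> r k)" for r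
    by (simp add: bq_iter_def)
  have fx[measurable]: "(\<lambda>y. fst (?s y) i) \<in> borel_measurable ?P" for i using Suc by blast
  have sx[measurable]: "(\<lambda>y. snd (?s y) i) \<in> borel_measurable ?P" for i using Suc by blast
  have cm[measurable]: "(\<lambda>y. f (y i)) \<in> borel_measurable ?P" for i by (rule comp_meas[OF f])
  have F[measurable]: "(\<lambda>y. fst (bq_step n E a D d \<rho> (\<lambda>i. f (y i)) (?s y)) i) \<in> borel_measurable ?P" for i
    unfolding bq_step_fst by measurable
  have S: "(\<lambda>y. snd (bq_step n E a D d \<rho> (\<lambda>i. f (y i)) (?s y)) i) \<in> borel_measurable ?P" for i
    unfolding bq_step_snd by measurable
  show ?case using F S by (simp add: it)
qed

lemma conv_meas:
  assumes f[measurable]: "f \<in> borel_measurable M"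
  shows "{y \<in> space (PiM {1..n} (\<lambda>_. M)). bq_converges_at n E a D d \<rho> (\<lambda>i. f (y i)) c} \<in> sets (PiM {1..n} (\<lambda>_. M))"
proof -
  have [measurable]: "(\<lambda>y. fst (bq_iter n E a D d \<rho> (\<lambda>i. f (y i)) k) i) \<in> borel_measurable (PiM {1..n} (\<lambda>_. M))" for k i
    using bq_meas[OF f] by blast
  show ?thesis unfolding bq_converges_at_def by measurable
qed

lemma integral_le_nn: "integrable Q g \<Longrightarrow> ennreal (integral\<^sup>L Q g) \<le> (\<integral>\<^sup>+x. ennreal (g x) \<partial>Q)"
proof -
  assume g: "integrable Q g"
  have gp: "integrable Q (\<lambda>x. max 0 (g x))" using g by auto
  have "integral\<^sup>L Q g \<le> integral\<^sup>L Q (\<lambda>x. max 0 (g x))" by (rule integral_mono[OF g gp]) simp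
  hence "ennreal (integral\<^sup>L Q g) \<le> ennreal (integral\<^sup>L Q (\<lambda>x. max 0 (g x)))" by (rule ennreal_leI)
  also have "\<dots> = (\<integral>\<^sup>+x. ennreal (max 0 (g x)) \<partial>Q)"
    by (rule nn_integral_eq_integral[OF gp, symmetric]) simp
  also have "\<dots> = (\<integral>\<^sup>+x. ennreal (g x) \<partial>Q)" by (simp add: ennreal_max_0)
  finally show ?thesis .
qed

lemma jensen_exp:
  assumes Q: "prob_space Q" and Y: "integrable Q Y"
  shows "ennreal (exp (integral\<^sup>L Q Y)) \<le> (\<integral>\<^sup>+x. ennreal (exp (Y x)) \<partial>Q)"
proof -
  interpret prob_space Q by fact
  define m where "m = integral\<^sup>L Q Y"
  have gi: "integrable Q (\<lambda>x. exp m * (1 + Y x - m))" using Y by auto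
  have "integral\<^sup>L Q (\<lambda>x. exp m * (1 + Y x - m)) = exp m"
    using Y by (simp add: m_def Bochner_Integration.integral_diff Bochner_Integration.integral_add prob_space)
  hence "ennreal (exp m) \<le> (\<integral>\<^sup>+x. ennreal (exp m * (1 + Y x - m)) \<partial>Q)"
    using integral_le_nn[OF gi] by simp
  also have "\<dots> \<le> (\<integral>\<^sup>+x. ennreal (exp (Y x)) \<partial>Q)"
  proof (intro nn_integral_mono ennreal_leI)
    fix x
    have "exp (Y x - m) \<ge> 1 + (Y x - m)" by (rule exp_ge_add_one_self)
    hence "exp m * exp (Y x - m) \<ge> exp m * (1 + (Y x - m))" by (intro mult_left_mono) auto
    moreover have "exp m * exp (Y x - m) = exp (Y x)" by (simp add: exp_diff)
    ultimately show "exp m * (1 + Y x - m) \<le> exp (Y x)" by (simp add: algebra_simps)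
  qed
  finally show ?thesis by (simp add: m_def)
qed

context bqc
begin

lemma conv_iff: "bq_converges_at n E a D d \<rho> r c \<longleftrightarrow> (\<exists>k0. \<forall>k\<ge>k0. \<forall>i\<in>{1..n}. q k i = c)"
  by (simp add: bq_converges_at_def q_def Q_def X_def)

lemma conv_lower: "(\<Sum>i\<in>{1..n}. r i) < real n * t - 3 * \<rho> * D * (real n)\<^sup>2 \<Longrightarrow> bq_converges_at n E a D d \<rho> r a"
  using alg_lower conv_iff by blast

lemma conv_upper: "bq_converges_at n E a D d \<rho> r a \<Longrightarrow> (\<Sum>i\<in>{1..n}. r i) \<le> real n * t + 2 * \<rho> * D * (real n)\<^sup>2"
  using alg_upper conv_iff by blast

lemma conv_excl: "bq_converges_at n E a D d \<rho> r (a + D) \<Longrightarrow> \<not> bq_converges_at n E a D d \<rho> r a"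
proof
  assume A: "bq_converges_at n E a D d \<rho> r (a + D)" and B: "bq_converges_at n E a D d \<rho> r a"
  obtain k1 where k1: "\<forall>k\<ge>k1. \<forall>i\<in>{1..n}. q k i = a + D" using A conv_iff by blast
  obtain k2 where k2: "\<forall>k\<ge>k2. \<forall>i\<in>{1..n}. q k i = a" using B conv_iff by blast
  have "1 \<in> {1..n}" using n1 by simp
  hence "a + D = a" using k1 k2 by (metis max.cobounded1 max.cobounded2)
  thus False using Dpos by simp
qed

end

context setting
begin

definition "Da = KL M1 M2 + KL M2 M1"
definition "aa = - KL M2 M1"
definition "dd = KL M1 M2 + \<tau>"
definition "rho n = 1 / (6 * (real n)\<^sup>2 * Da)"
definition "PP1 n = PiM {1..n} (\<lambda>_. M1)"
definition "PP2 n = PiM {1..n} (\<lambda>_. M2)"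
definition "RR n E = {y \<in> space (PP1 n). bq_converges_at n E aa Da dd (rho n) (\<lambda>i. L (y i)) aa}"
definition "Sx n y = (\<Sum>i\<in>{1..n}. L (y i))"

lemma Da_pos: "0 < Da" using K12pos K21pos by (simp add: Da_def)

lemma bq_inst:
  assumes "simple_graph_on n E" "connected_on n E" "n \<ge> 1"
  shows "bqc n E Da dd (rho n)"
  using assms K12pos K21pos tau1 tau2 Da_pos
  by unfold_locales (auto simp: rho_def dd_def Da_def)

lemma tval: "aa + Da - dd = - \<tau>" by (simp add: aa_def Da_def dd_def)

lemma rho3: "n \<ge> 1 \<Longrightarrow> 3 * rho n * Da * (real n)\<^sup>2 = 1/2"
  using Da_pos by (simp add: rho_def field_simps)
lemma rho2: "n \<ge> 1 \<Longrightarrow> 2 * rho n * Da * (real n)\<^sup>2 = 1/3"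
  using Da_pos by (simp add: rho_def field_simps)

lemma PP1_prob: "prob_space (PP1 n)" unfolding PP1_def by (intro prob_space_PiM P1)
lemma PP2_prob: "prob_space (PP2 n)" unfolding PP2_def by (intro prob_space_PiM P2)

lemma sets_PP: "sets (PP2 n) = sets (PP1 n)"
  unfolding PP1_def PP2_def by (rule sets_PiM_cong) (auto simp: sets21)
lemma space_PP: "space (PP2 n) = space (PP1 n)"
  using sets_eq_imp_space_eq[OF sets_PP] .

lemma R_lower:
  assumes "simple_graph_on n E" "connected_on n E" "n \<ge> 1" "y \<in> space (PP1 n)"
    and "Sx n y < - (real n * \<tau>) - 1/2"
  shows "y \<in> RR n E"
proof -
  interpret b: bqc n E aa Da dd "rho n" "\<lambda>i. L (y i)" by (rule bq_inst[OF assms(1-3)])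
  have "bq_converges_at n E aa Da dd (rho n) (\<lambda>i. L (y i)) aa"
    by (rule b.conv_lower) (use assms(5) rho3[OF assms(3)] tval in \<open>simp add: Sx_def b.t_def\<close>)
  thus ?thesis using assms(4) by (simp add: RR_def)
qed

lemma R_upper:
  assumes "simple_graph_on n E" "connected_on n E" "n \<ge> 1" "y \<in> RR n E"
  shows "Sx n y \<le> - (real n * \<tau>) + 1/3"
proof -
  interpret b: bqc n E aa Da dd "rho n" "\<lambda>i. L (y i)" by (rule bq_inst[OF assms(1-3)])
  have "bq_converges_at n E aa Da dd (rho n) (\<lambda>i. L (y i)) aa" using assms(4) by (simp add: RR_def)
  from b.conv_upper[OF this] show ?thesis
    using rho2[OF assms(3)] tval by (simp add: Sx_def b.t_def)
qed

lemma acc_eq: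
  assumes "simple_graph_on n E" "connected_on n E" "n \<ge> 1"
  shows "accept_set M1 M2 \<tau> n E = space (PP1 n) - RR n E"
proof -
  have eqK: "aa + Da = KL M1 M2" by (simp add: aa_def Da_def)
  have "(bq_cycles n E aa Da dd (rho n) (\<lambda>i. L (y i)) \<or> bq_converges_at n E aa Da dd (rho n) (\<lambda>i. L (y i)) (KL M1 M2))
        \<longleftrightarrow> \<not> bq_converges_at n E aa Da dd (rho n) (\<lambda>i. L (y i)) aa" for y
  proof -
    interpret b: bqc n E aa Da dd "rho n" "\<lambda>i. L (y i)" by (rule bq_inst[OF assms])
    show ?thesis using b.conv_excl eqK unfolding bq_cycles_def by metis
  qed
  thus ?thesis
    unfolding accept_set_def RR_def PP1_def Let_def
    by (auto simp: L_def aa_def Da_def dd_def rho_def)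
qed

lemma RR_meas1: "RR n E \<in> sets (PP1 n)"
  unfolding RR_def PP1_def by (rule conv_meas[OF Lm1])
lemma RR_meas2: "RR n E \<in> sets (PP2 n)" unfolding sets_PP by (rule RR_meas1)
lemma RR_sub: "RR n E \<subseteq> space (PP1 n)" by (auto simp: RR_def)

lemma exp_pow: "exp (real n * x) = exp x ^ n" by (rule exp_of_nat_mult)

lemma alpha_up:
  assumes g: "simple_graph_on n E" "connected_on n E" "n \<ge> 1" and lm: "lm \<ge> 0"
    and p: "Phi lm = ennreal p" "p \<ge> 0"
  shows "measure (PP1 n) (RR n E) \<le> exp (lm / 3 - n * (lm * \<tau>)) * p ^ n"
proof -
  interpret Q: prob_space "PP1 n" by (rule PP1_prob)
  let ?A = "{y \<in> space (PP1 n). real n * \<tau> - 1/3 \<le> (\<Sum>i\<in>{1..n}. - L (y i))}"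
  have sub: "RR n E \<subseteq> ?A"
  proof
    fix y assume y: "y \<in> RR n E"
    have "Sx n y \<le> - (real n * \<tau>) + 1/3" by (rule R_upper[OF g y])
    thus "y \<in> ?A" using y by (auto simp: RR_def Sx_def sum_negf)
  qed
  have Am: "?A \<in> sets (PP1 n)" unfolding PP1_def by measurable
  have "emeasure (PP1 n) ?A \<le> ennreal (exp (- lm * (real n * \<tau> - 1/3))) * (\<integral>\<^sup>+x. ennreal (exp (lm * (- L x))) \<partial>M1) ^ card {1..n}"
    unfolding PP1_def by (rule chernoff[OF P1 _ _ lm]) auto
  also have "(\<integral>\<^sup>+x. ennreal (exp (lm * (- L x))) \<partial>M1) = Phi lm" by (simp add: Phi_def)
  finally have "ennreal (measure (PP1 n) ?A) \<le> ennreal (exp (- lm * (real n * \<tau> - 1/3)) * p ^ n)"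
    using p by (simp add: Q.emeasure_eq_measure ennreal_power ennreal_mult)
  hence "measure (PP1 n) ?A \<le> exp (- lm * (real n * \<tau> - 1/3)) * p ^ n"
    using p by (subst (asm) ennreal_le_iff) auto
  moreover have "measure (PP1 n) (RR n E) \<le> measure (PP1 n) ?A" by (rule Q.finite_measure_mono[OF sub Am])
  moreover have "- lm * (real n * \<tau> - 1/3) = lm / 3 - n * (lm * \<tau>)" by (simp add: algebra_simps)
  ultimately show ?thesis by simp
qed

lemma beta_up:
  assumes g: "simple_graph_on n E" "connected_on n E" "n \<ge> 1" and mu: "mu \<ge> 0"
    and p: "Phi (1 - mu) = ennreal p" "p \<ge> 0"
  shows "measure (PP2 n) (space (PP1 n) - RR n E) \<le> exp (mu / 2 - n * (- (mu * \<tau>))) * p ^ n"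
proof -
  interpret Q: prob_space "PP2 n" by (rule PP2_prob)
  let ?A = "{y \<in> space (PP2 n). - (real n * \<tau>) - 1/2 \<le> (\<Sum>i\<in>{1..n}. L (y i))}"
  have sub: "space (PP1 n) - RR n E \<subseteq> ?A"
  proof
    fix y assume y: "y \<in> space (PP1 n) - RR n E"
    hence "\<not> Sx n y < - (real n * \<tau>) - 1/2" using R_lower[OF g] by blast
    thus "y \<in> ?A" using y space_PP by (auto simp: Sx_def)
  qed
  have Am: "?A \<in> sets (PP2 n)" unfolding PP2_def by measurable
  have "emeasure (PP2 n) ?A \<le> ennreal (exp (- mu * (- (real n * \<tau>) - 1/2))) * (\<integral>\<^sup>+x. ennreal (exp (mu * L x)) \<partial>M2) ^ card {1..n}"
    unfolding PP2_def by (rule chernoff[OF P2 _ _ mu]) auto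
  also have "(\<integral>\<^sup>+x. ennreal (exp (mu * L x)) \<partial>M2) = Phi (1 - mu)" by (rule Phi_shift)
  finally have "ennreal (measure (PP2 n) ?A) \<le> ennreal (exp (- mu * (- (real n * \<tau>) - 1/2)) * p ^ n)"
    using p by (simp add: Q.emeasure_eq_measure ennreal_power ennreal_mult)
  hence "measure (PP2 n) ?A \<le> exp (- mu * (- (real n * \<tau>) - 1/2)) * p ^ n"
    using p by (subst (asm) ennreal_le_iff) auto
  moreover have "measure (PP2 n) (space (PP1 n) - RR n E) \<le> measure (PP2 n) ?A" by (rule Q.finite_measure_mono[OF sub Am])
  moreover have "- mu * (- (real n * \<tau>) - 1/2) = mu / 2 - n * (- (mu * \<tau>))" by (simp add: algebra_simps)
  ultimately show ?thesis by simp
qed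

lemma alpha_tilt:
  assumes m: "0 < \<mu>" "\<mu> < 1" "0 < s" "0 < s'" "\<mu> + s \<le> 1" "0 \<le> \<mu> - s'" and C: "C1 < C2"
  shows "Phir \<mu> ^ n \<le> exp (n * (\<mu> * C2)) * measure (PP1 n) {y \<in> space (PP1 n). n * C1 < (\<Sum>i\<in>{1..n}. - L (y i)) \<and> (\<Sum>i\<in>{1..n}. - L (y i)) \<le> n * C2}
     + (exp (- s * C2) * Phir (\<mu> + s)) ^ n + (exp (s' * C1) * Phir (\<mu> - s')) ^ n"
proof -
  have pe: "(\<integral>\<^sup>+x. ennreal (exp (v * (- L x))) \<partial>M1) = Phi v" for v
    unfolding Phi_def by (intro nn_integral_cong) simp
  have i0: "(\<integral>\<^sup>+x. ennreal (exp (\<mu> * (- L x))) \<partial>M1) = ennreal (Phir \<mu>)"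
    using Phi_eq[of \<mu>] m pe[of \<mu>] by simp
  have i1: "(\<integral>\<^sup>+x. ennreal (exp ((\<mu> + s) * (- L x))) \<partial>M1) = ennreal (Phir (\<mu> + s))"
    using Phi_eq[of "\<mu> + s"] m pe[of "\<mu> + s"] by simp
  have i2: "(\<integral>\<^sup>+x. ennreal (exp ((\<mu> - s') * (- L x))) \<partial>M1) = ennreal (Phir (\<mu> - s'))"
    using Phi_eq[of "\<mu> - s'"] m pe[of "\<mu> - s'"] by simp
  have nn: "0 \<le> Phir \<mu>" "0 \<le> Phir (\<mu> + s)" "0 \<le> Phir (\<mu> - s')" using Phir_pos m by (auto intro: less_imp_le)
  have T: "Phir \<mu> ^ card {1..n} \<le> exp (card {1..n} * max (\<mu> * C1) (\<mu> * C2)) *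
           measure (PiM {1..n} (\<lambda>_. M1)) {y \<in> space (PiM {1..n} (\<lambda>_. M1)). card {1..n} * C1 < (\<Sum>i\<in>{1..n}. - L (y i)) \<and> (\<Sum>i\<in>{1..n}. - L (y i)) \<le> card {1..n} * C2}
         + exp (- s * card {1..n} * C2) * Phir (\<mu> + s) ^ card {1..n} + exp (s' * card {1..n} * C1) * Phir (\<mu> - s') ^ card {1..n}"
    by (rule tilt_lower[OF P1 _ _ _ _ i0 i1 i2 nn]) (use m in auto)
  have mx: "max (\<mu> * C1) (\<mu> * C2) = \<mu> * C2" using m C by (simp add: max_def)
  have e1: "exp (- s * n * C2) = exp (- s * C2) ^ n" using exp_pow[of n "- s * C2"] by (simp add: mult_ac)
  have e2: "exp (s' * n * C1) = exp (s' * C1) ^ n" using exp_pow[of n "s' * C1"] by (simp add: mult_ac)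
  have cn: "card {1..n} = n" by simp
  from T have T': "Phir \<mu> ^ n \<le> exp (n * (\<mu> * C2)) *
           measure (PiM {1..n} (\<lambda>_. M1)) {y \<in> space (PiM {1..n} (\<lambda>_. M1)). n * C1 < (\<Sum>i\<in>{1..n}. - L (y i)) \<and> (\<Sum>i\<in>{1..n}. - L (y i)) \<le> n * C2}
         + exp (- s * C2) ^ n * Phir (\<mu> + s) ^ n + exp (s' * C1) ^ n * Phir (\<mu> - s') ^ n"
    by (simp only: cn mx e1 e2)
  show ?thesis using T' by (simp add: PP1_def power_mult_distrib)
qed

lemma beta_tilt:
  assumes m: "0 < \<mu>" "\<mu> < 1" "0 < s" "0 < s'" "\<mu> + s \<le> 1" "0 \<le> \<mu> - s'" and C: "C1 < C2"
  shows "Phir \<mu> ^ n \<le> exp (n * ((1 - \<mu>) * (- C1))) * measure (PP2 n) {y \<in> space (PP2 n). n * (- C2) < (\<Sum>i\<in>{1..n}. L (y i)) \<and> (\<Sum>i\<in>{1..n}. L (y i)) \<le> n * (- C1)}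
     + (exp (s' * C1) * Phir (\<mu> - s')) ^ n + (exp (- s * C2) * Phir (\<mu> + s)) ^ n"
proof -
  have i0: "(\<integral>\<^sup>+x. ennreal (exp ((1 - \<mu>) * L x)) \<partial>M2) = ennreal (Phir \<mu>)"
    using Phi_eq[of \<mu>] m Phi_shift[of "1 - \<mu>"] by simp
  have i1: "(\<integral>\<^sup>+x. ennreal (exp ((1 - \<mu> + s') * L x)) \<partial>M2) = ennreal (Phir (\<mu> - s'))"
    using Phi_eq[of "\<mu> - s'"] m Phi_shift[of "1 - \<mu> + s'"] by simp
  have i2: "(\<integral>\<^sup>+x. ennreal (exp ((1 - \<mu> - s) * L x)) \<partial>M2) = ennreal (Phir (\<mu> + s))"
    using Phi_eq[of "\<mu> + s"] m Phi_shift[of "1 - \<mu> - s"] by simp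
  have nn: "0 \<le> Phir \<mu>" "0 \<le> Phir (\<mu> - s')" "0 \<le> Phir (\<mu> + s)" using Phir_pos m by (auto intro: less_imp_le)
  have T: "Phir \<mu> ^ card {1..n} \<le> exp (card {1..n} * max ((1 - \<mu>) * (- C2)) ((1 - \<mu>) * (- C1))) *
           measure (PiM {1..n} (\<lambda>_. M2)) {y \<in> space (PiM {1..n} (\<lambda>_. M2)). card {1..n} * (- C2) < (\<Sum>i\<in>{1..n}. L (y i)) \<and> (\<Sum>i\<in>{1..n}. L (y i)) \<le> card {1..n} * (- C1)}
         + exp (- s' * card {1..n} * (- C1)) * Phir (\<mu> - s') ^ card {1..n} + exp (s * card {1..n} * (- C2)) * Phir (\<mu> + s) ^ card {1..n}"
    by (rule tilt_lower[OF P2 Lm2 _ _ _ i0 i1 i2 nn]) (use m in auto)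
  have mx: "max ((1 - \<mu>) * (- C2)) ((1 - \<mu>) * (- C1)) = (1 - \<mu>) * (- C1)" using m C by (simp add: max_def)
  have e1: "exp (- s' * n * (- C1)) = exp (s' * C1) ^ n" using exp_pow[of n "s' * C1"] by (simp add: mult_ac)
  have e2: "exp (s * n * (- C2)) = exp (- s * C2) ^ n" using exp_pow[of n "- s * C2"] by (simp add: mult_ac)
  have cn: "card {1..n} = n" by simp
  from T have T': "Phir \<mu> ^ n \<le> exp (n * ((1 - \<mu>) * (- C1))) *
           measure (PiM {1..n} (\<lambda>_. M2)) {y \<in> space (PiM {1..n} (\<lambda>_. M2)). n * (- C2) < (\<Sum>i\<in>{1..n}. L (y i)) \<and> (\<Sum>i\<in>{1..n}. L (y i)) \<le> n * (- C1)}
         + exp (s' * C1) ^ n * Phir (\<mu> - s') ^ n + exp (- s * C2) ^ n * Phir (\<mu> + s) ^ n"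
    by (simp only: cn mx e1 e2)
  show ?thesis using T' by (simp add: PP2_def power_mult_distrib)
qed

lemma Lam_Phi: "Lam M1 M2 l = (if Phi l = \<infinity> then \<infinity> else ereal (ln (enn2real (Phi l))))"
  by (simp add: Lam_def Phi_def L_def Let_def)

lemma Lam_mu: "0 \<le> \<mu> \<Longrightarrow> \<mu> \<le> 1 \<Longrightarrow> Lam M1 M2 \<mu> = ereal (phi \<mu>)"
proof -
  assume "0 \<le> \<mu>" "\<mu> \<le> 1"
  hence "Phi \<mu> \<noteq> \<top>" using Phi_eq[of \<mu>] by simp
  thus ?thesis by (simp add: Lam_Phi phi_def Phir_def)
qed

lemma Lam_star_ge: "0 \<le> \<mu> \<Longrightarrow> \<mu> \<le> 1 \<Longrightarrow> ereal (\<mu> * \<tau> - phi \<mu>) \<le> Lam_star M1 M2 \<tau>"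
  unfolding Lam_star_def by (rule SUP_upper2[of \<mu>]) (simp_all add: Lam_mu)

lemma main:
  fixes G :: "nat \<Rightarrow> nat \<Rightarrow> nat \<Rightarrow> bool"
  assumes G: "\<forall>n\<ge>2. simple_graph_on n (G n) \<and> connected_on n (G n)"
  defines "\<alpha> \<equiv> \<lambda>n. measure (PP1 n) (space (PP1 n) - accept_set M1 M2 \<tau> n (G n))"
    and "\<beta> \<equiv> \<lambda>n. measure (PP2 n) (accept_set M1 M2 \<tau> n (G n))"
  shows "liminf (\<lambda>n. err_exp n (\<alpha> n)) = Lam_star M1 M2 \<tau>
       \<and> liminf (\<lambda>n. err_exp n (\<beta> n)) = Lam_star M1 M2 \<tau> - ereal \<tau>"
proof -
  have gr: "simple_graph_on n (G n)" "connected_on n (G n)" "n \<ge> 1" if "n \<ge> 2" for n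
    using G that by auto
  have aeq: "\<alpha> n = measure (PP1 n) (RR n (G n))" if "n \<ge> 2" for n
  proof -
    have "space (PP1 n) - (space (PP1 n) - RR n (G n)) = RR n (G n)" using RR_sub by blast
    thus ?thesis unfolding \<alpha>_def using acc_eq[OF gr[OF that]] by simp
  qed
  have beq: "\<beta> n = measure (PP2 n) (space (PP1 n) - RR n (G n))" if "n \<ge> 2" for n
    unfolding \<beta>_def using acc_eq[OF gr[OF that]] by simp
  have a01: "0 \<le> \<alpha> n" "\<alpha> n \<le> 1" for n
    unfolding \<alpha>_def using prob_space.prob_le_1[OF PP1_prob] by auto
  have b01: "0 \<le> \<beta> n" "\<beta> n \<le> 1" for n
    unfolding \<beta>_def using prob_space.prob_le_1[OF PP2_prob] by auto
  have Kpos: "0 < KL M1 M2" "0 < KL M2 M1" by (rule K12pos, rule K21pos)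

  have T1: "Lam_star M1 M2 \<tau> \<le> liminf (\<lambda>n. err_exp n (\<alpha> n))"
    unfolding Lam_star_def
  proof (rule SUP_least)
    fix l :: real
    show "ereal (l * \<tau>) - Lam M1 M2 l \<le> liminf (\<lambda>n. err_exp n (\<alpha> n))"
    proof (cases "Phi l = \<infinity>")
      case True thus ?thesis by (simp add: Lam_Phi)
    next
      case False
      define p where "p = enn2real (Phi l)"
      have Pp: "Phi l = ennreal p" using False by (simp add: p_def less_top ennreal_enn2real_if)
      have pp: "0 < p" using Phi_pos[of l] Pp by simp
      have La: "Lam M1 M2 l = ereal (ln p)" using False by (simp add: Lam_Phi p_def)
      show ?thesis
      proof (cases "l \<ge> 0")
        case True
        have "ereal (l * \<tau> - ln p) \<le> liminf (\<lambda>n. err_exp n (\<alpha> n))"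
        proof (rule liminf_lower[OF a01(1) pp])
          show "eventually (\<lambda>n. \<alpha> n \<le> exp (l / 3 - n * (l * \<tau>)) * p ^ n) sequentially"
            using eventually_ge_at_top[of 2]
          proof eventually_elim
            case (elim n)
            show ?case using aeq[OF elim] alpha_up[OF gr(1)[OF elim] gr(2)[OF elim] gr(3)[OF elim] True Pp less_imp_le[OF pp]]
              by simp
          qed
        qed
        thus ?thesis using La by simp
      next
        case False
        have "ennreal (exp (integral\<^sup>L M1 (\<lambda>x. - l * L x))) \<le> (\<integral>\<^sup>+x. ennreal (exp (- l * L x)) \<partial>M1)"
          by (rule jensen_exp[OF P1]) (use intL1 in simp)
        hence "ennreal (exp (- l * KL M1 M2)) \<le> ennreal p" using Pp EL1 by (simp add: Phi_def)
        hence "exp (- l * KL M1 M2) \<le> p" using pp by (subst (asm) ennreal_le_iff) auto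
        hence "- l * KL M1 M2 \<le> ln p" using pp by (metis exp_le_cancel_iff exp_ln)
        moreover have "l * (\<tau> + KL M1 M2) < 0" using False tau1 by (simp add: mult_neg_pos)
        ultimately have "l * \<tau> - ln p \<le> 0" by (simp add: algebra_simps)
        hence "ereal (l * \<tau> - ln p) \<le> 0" by simp
        also have "0 \<le> liminf (\<lambda>n. err_exp n (\<alpha> n))" by (rule liminf_nonneg[OF a01])
        finally show ?thesis using La by simp
      qed
    qed
  qed

  have T2': "Lam_star M1 M2 \<tau> \<le> liminf (\<lambda>n. err_exp n (\<beta> n)) + ereal \<tau>"
    unfolding Lam_star_def
  proof (rule SUP_least)
    fix l :: real
    show "ereal (l * \<tau>) - Lam M1 M2 l \<le> liminf (\<lambda>n. err_exp n (\<beta> n)) + ereal \<tau>"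
    proof (cases "Phi l = \<infinity>")
      case True thus ?thesis by (simp add: Lam_Phi)
    next
      case False
      define p where "p = enn2real (Phi l)"
      have Pp: "Phi l = ennreal p" using False by (simp add: p_def less_top ennreal_enn2real_if)
      have pp: "0 < p" using Phi_pos[of l] Pp by simp
      have La: "Lam M1 M2 l = ereal (ln p)" using False by (simp add: Lam_Phi p_def)
      show ?thesis
      proof (cases "l \<le> 1")
        case True
        define mu where "mu = 1 - l"
        have mu: "0 \<le> mu" "Phi (1 - mu) = ennreal p" using True Pp by (auto simp: mu_def)
        have "ereal (- (mu * \<tau>) - ln p) \<le> liminf (\<lambda>n. err_exp n (\<beta> n))"
        proof (rule liminf_lower[OF b01(1) pp])
          show "eventually (\<lambda>n. \<beta> n \<le> exp (mu / 2 - n * (- (mu * \<tau>))) * p ^ n) sequentially"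
            using eventually_ge_at_top[of 2]
          proof eventually_elim
            case (elim n)
            show ?case using beq[OF elim] beta_up[OF gr(1)[OF elim] gr(2)[OF elim] gr(3)[OF elim] mu(1) mu(2) less_imp_le[OF pp]]
              by simp
          qed
        qed
        hence "ereal (- (mu * \<tau>) - ln p) + ereal \<tau> \<le> liminf (\<lambda>n. err_exp n (\<beta> n)) + ereal \<tau>"
          by (rule add_right_mono)
        thus ?thesis using La by (simp add: mu_def algebra_simps)
      next
        case False
        have "ennreal (exp (integral\<^sup>L M2 (\<lambda>x. (1 - l) * L x))) \<le> (\<integral>\<^sup>+x. ennreal (exp ((1 - l) * L x)) \<partial>M2)"
          by (rule jensen_exp[OF P2]) (use intL2 in simp)
        also have "\<dots> = Phi l" using Phi_shift[of "1 - l"] by simp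
        finally have J: "ennreal (exp (integral\<^sup>L M2 (\<lambda>x. (1 - l) * L x))) \<le> ennreal p" using Pp by simp
        have IE: "integral\<^sup>L M2 (\<lambda>x. (1 - l) * L x) = (l - 1) * KL M2 M1"
          by (simp only: integral_mult_right_zero EL2) (simp add: algebra_simps)
        have "ennreal (exp ((l - 1) * KL M2 M1)) \<le> ennreal p" using J unfolding IE .
        hence "exp ((l - 1) * KL M2 M1) \<le> p" using pp by (subst (asm) ennreal_le_iff) auto
        hence "(l - 1) * KL M2 M1 \<le> ln p" using pp by (metis exp_le_cancel_iff exp_ln)
        moreover have "(l - 1) * (\<tau> - KL M2 M1) < 0" using False tau2 by (simp add: mult_pos_neg)
        ultimately have "l * \<tau> - ln p \<le> \<tau>" by (simp add: algebra_simps)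
        hence "ereal (l * \<tau> - ln p) \<le> 0 + ereal \<tau>" by simp
        also have "\<dots> \<le> liminf (\<lambda>n. err_exp n (\<beta> n)) + ereal \<tau>"
          by (rule add_right_mono) (rule liminf_nonneg[OF b01])
        finally show ?thesis using La by simp
      qed
    qed
  qed
  have T2: "Lam_star M1 M2 \<tau> - ereal \<tau> \<le> liminf (\<lambda>n. err_exp n (\<beta> n))"
    using T2' by (simp add: ereal_minus_le_iff)

  have T3: "liminf (\<lambda>n. err_exp n (\<alpha> n)) \<le> Lam_star M1 M2 \<tau>"
  proof (rule ereal_le_epsilon2)
    fix \<delta> :: real assume d: "0 < \<delta>"
    define \<eta> where "\<eta> = min \<delta> (KL M2 M1 - \<tau>) / 2"
    have eta: "0 < \<eta>" "2 * \<eta> \<le> \<delta>" "2 * \<eta> \<le> KL M2 M1 - \<tau>" using d tau2 by (auto simp: \<eta>_def)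
    define C1 where "C1 = \<tau> + \<eta> / 2"
    define C2 where "C2 = \<tau> + \<eta>"
    obtain \<mu> s s' where g: "0 < \<mu>" "\<mu> < 1" "0 < s" "0 < s'" "\<mu> + s \<le> 1" "0 \<le> \<mu> - s'"
      "Phir (\<mu> + s) < Phir \<mu> * exp (s * C2)" "Phir (\<mu> - s') < Phir \<mu> * exp (- s' * C1)"
      using good_point[of C1 C2] tau1 eta by (auto simp: C1_def C2_def)
    define a1 where "a1 = exp (- s * C2) * Phir (\<mu> + s)"
    define a2 where "a2 = exp (s' * C1) * Phir (\<mu> - s')"
    have p0: "0 < Phir \<mu>" using Phir_pos g by simp
    have a1: "0 \<le> a1" "a1 < Phir \<mu>"
    proof -
      show "0 \<le> a1" using Phir_pos[of "\<mu> + s"] g by (simp add: a1_def)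
      have "a1 < exp (- s * C2) * (Phir \<mu> * exp (s * C2))" unfolding a1_def by (rule mult_strict_left_mono[OF g(7)]) simp
      also have "\<dots> = Phir \<mu>" by (simp add: exp_minus field_simps)
      finally show "a1 < Phir \<mu>" .
    qed
    have a2: "0 \<le> a2" "a2 < Phir \<mu>"
    proof -
      show "0 \<le> a2" using Phir_pos[of "\<mu> - s'"] g by (simp add: a2_def)
      have "a2 < exp (s' * C1) * (Phir \<mu> * exp (- s' * C1))" unfolding a2_def by (rule mult_strict_left_mono[OF g(8)]) simp
      also have "\<dots> = Phir \<mu>" by (simp add: exp_minus field_simps)
      finally show "a2 < Phir \<mu>" .
    qed
    have "liminf (\<lambda>n. err_exp n (\<alpha> n)) \<le> ereal (\<mu> * C2 - ln (Phir \<mu>))"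
    proof (rule liminf_upper[OF a01(1) p0 a1 a2])
      show "eventually (\<lambda>n. Phir \<mu> ^ n \<le> exp (n * (\<mu> * C2)) * \<alpha> n + a1 ^ n + a2 ^ n) sequentially"
        using eventually_ge_at_top[of "nat \<lceil>1 / \<eta>\<rceil> + 2"]
      proof eventually_elim
        case (elim n)
        have n2: "n \<ge> 2" using elim by simp
        have nb: "real n * \<eta> \<ge> 1"
        proof -
          have "1 / \<eta> \<le> real (nat \<lceil>1 / \<eta>\<rceil>)" by (rule real_nat_ceiling_ge)
          also have "\<dots> \<le> real n" using elim by (intro of_nat_mono) linarith
          finally show ?thesis using eta(1) by (simp add: pos_divide_le_eq)
        qed
        let ?B = "{y \<in> space (PP1 n). n * C1 < (\<Sum>i\<in>{1..n}. - L (y i)) \<and> (\<Sum>i\<in>{1..n}. - L (y i)) \<le> n * C2}"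
        have sub: "?B \<subseteq> RR n (G n)"
        proof
          fix y assume y: "y \<in> ?B"
          have "Sx n y < - (n * C1)" using y by (simp add: Sx_def sum_negf)
          also have "- (n * C1) \<le> - (real n * \<tau>) - 1/2" using nb by (simp add: C1_def algebra_simps)
          finally have "Sx n y < - (real n * \<tau>) - 1/2" .
          moreover have "y \<in> space (PP1 n)" using y by simp
          ultimately show "y \<in> RR n (G n)"
            using R_lower[OF gr(1)[OF n2] gr(2)[OF n2] gr(3)[OF n2]] by blast
        qed
        interpret Q: prob_space "PP1 n" by (rule PP1_prob)
        have "measure (PP1 n) ?B \<le> \<alpha> n"
          unfolding aeq[OF n2] by (rule Q.finite_measure_mono[OF sub RR_meas1])
        hence "exp (n * (\<mu> * C2)) * measure (PP1 n) ?B \<le> exp (n * (\<mu> * C2)) * \<alpha> n"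
          by (intro mult_left_mono) auto
        moreover have C12: "C1 < C2" using eta by (simp add: C1_def C2_def)
        moreover note tl = alpha_tilt[OF g(1-6) C12, of n]
        ultimately show ?case unfolding a1_def a2_def by linarith
      qed
    qed
    also have "\<dots> \<le> ereal (\<mu> * \<tau> - phi \<mu>) + ereal \<delta>"
    proof -
      have "\<mu> * \<eta> \<le> \<delta>" using g eta by (smt (verit) mult_left_le_one_le)
      thus ?thesis by (simp add: phi_def C2_def algebra_simps)
    qed
    also have "\<dots> \<le> Lam_star M1 M2 \<tau> + ereal \<delta>"
      by (rule add_right_mono) (rule Lam_star_ge, use g in auto)
    finally show "liminf (\<lambda>n. err_exp n (\<alpha> n)) \<le> Lam_star M1 M2 \<tau> + ereal \<delta>" .
  qed

  have T4: "liminf (\<lambda>n. err_exp n (\<beta> n)) \<le> Lam_star M1 M2 \<tau> - ereal \<tau>"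
  proof (rule ereal_le_epsilon2)
    fix \<delta> :: real assume d: "0 < \<delta>"
    define \<eta> where "\<eta> = min \<delta> (\<tau> + KL M1 M2) / 2"
    have eta: "0 < \<eta>" "2 * \<eta> \<le> \<delta>" "2 * \<eta> \<le> \<tau> + KL M1 M2" using d tau1 by (auto simp: \<eta>_def)
    define C1 where "C1 = \<tau> - \<eta>"
    define C2 where "C2 = \<tau> - \<eta> / 2"
    obtain \<mu> s s' where g: "0 < \<mu>" "\<mu> < 1" "0 < s" "0 < s'" "\<mu> + s \<le> 1" "0 \<le> \<mu> - s'"
      "Phir (\<mu> + s) < Phir \<mu> * exp (s * C2)" "Phir (\<mu> - s') < Phir \<mu> * exp (- s' * C1)"
      using good_point[of C1 C2] tau2 eta by (auto simp: C1_def C2_def)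
    define a1 where "a1 = exp (- s * C2) * Phir (\<mu> + s)"
    define a2 where "a2 = exp (s' * C1) * Phir (\<mu> - s')"
    have p0: "0 < Phir \<mu>" using Phir_pos g by simp
    have a1: "0 \<le> a1" "a1 < Phir \<mu>"
    proof -
      show "0 \<le> a1" using Phir_pos[of "\<mu> + s"] g by (simp add: a1_def)
      have "a1 < exp (- s * C2) * (Phir \<mu> * exp (s * C2))" unfolding a1_def by (rule mult_strict_left_mono[OF g(7)]) simp
      also have "\<dots> = Phir \<mu>" by (simp add: exp_minus field_simps)
      finally show "a1 < Phir \<mu>" .
    qed
    have a2: "0 \<le> a2" "a2 < Phir \<mu>"
    proof -
      show "0 \<le> a2" using Phir_pos[of "\<mu> - s'"] g by (simp add: a2_def)
      have "a2 < exp (s' * C1) * (Phir \<mu> * exp (- s' * C1))" unfolding a2_def by (rule mult_strict_left_mono[OF g(8)]) simp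
      also have "\<dots> = Phir \<mu>" by (simp add: exp_minus field_simps)
      finally show "a2 < Phir \<mu>" .
    qed
    have "liminf (\<lambda>n. err_exp n (\<beta> n)) \<le> ereal ((1 - \<mu>) * (- C1) - ln (Phir \<mu>))"
    proof (rule liminf_upper[OF b01(1) p0 a2 a1])
      show "eventually (\<lambda>n. Phir \<mu> ^ n \<le> exp (n * ((1 - \<mu>) * (- C1))) * \<beta> n + a2 ^ n + a1 ^ n) sequentially"
        using eventually_ge_at_top[of "nat \<lceil>1 / \<eta>\<rceil> + 2"]
      proof eventually_elim
        case (elim n)
        have n2: "n \<ge> 2" using elim by simp
        have nb: "real n * \<eta> \<ge> 1"
        proof -
          have "1 / \<eta> \<le> real (nat \<lceil>1 / \<eta>\<rceil>)" by (rule real_nat_ceiling_ge)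
          also have "\<dots> \<le> real n" using elim by (intro of_nat_mono) linarith
          finally show ?thesis using eta(1) by (simp add: pos_divide_le_eq)
        qed
        let ?B = "{y \<in> space (PP2 n). n * (- C2) < (\<Sum>i\<in>{1..n}. L (y i)) \<and> (\<Sum>i\<in>{1..n}. L (y i)) \<le> n * (- C1)}"
        have sub: "?B \<subseteq> space (PP1 n) - RR n (G n)"
        proof
          fix y assume y: "y \<in> ?B"
          have "- (real n * \<tau>) + 1/3 < n * (- C2)" using nb by (simp add: C2_def algebra_simps)
          also have "\<dots> < Sx n y" using y by (simp add: Sx_def)
          finally have "\<not> Sx n y \<le> - (real n * \<tau>) + 1/3" by simp
          hence "y \<notin> RR n (G n)" using R_upper[OF gr(1)[OF n2] gr(2)[OF n2] gr(3)[OF n2]] by blast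
          thus "y \<in> space (PP1 n) - RR n (G n)" using y space_PP by auto
        qed
        have m2: "space (PP1 n) - RR n (G n) \<in> sets (PP2 n)"
          using RR_meas2 by (metis sets.Diff sets.top space_PP)
        interpret Q: prob_space "PP2 n" by (rule PP2_prob)
        have "measure (PP2 n) ?B \<le> \<beta> n"
          unfolding beq[OF n2] by (rule Q.finite_measure_mono[OF sub m2])
        hence "exp (n * ((1 - \<mu>) * (- C1))) * measure (PP2 n) ?B \<le> exp (n * ((1 - \<mu>) * (- C1))) * \<beta> n"
          by (intro mult_left_mono) auto
        moreover have C12: "C1 < C2" using eta by (simp add: C1_def C2_def)
        moreover note tl = beta_tilt[OF g(1-6) C12, of n]
        ultimately show ?case unfolding a1_def a2_def by linarith
      qed
    qed
    also have "\<dots> \<le> (Lam_star M1 M2 \<tau> - ereal \<tau>) + ereal \<delta>"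
    proof -
      have "(1 - \<mu>) * \<eta> \<le> \<delta>" using g eta by (smt (verit) mult_left_le_one_le)
      hence le: "(1 - \<mu>) * (- C1) - ln (Phir \<mu>) \<le> (\<mu> * \<tau> - phi \<mu>) - \<tau> + \<delta>"
        by (simp add: phi_def C1_def algebra_simps)
      have L: "ereal (\<mu> * \<tau> - phi \<mu>) \<le> Lam_star M1 M2 \<tau>" by (rule Lam_star_ge) (use g in auto)
      show ?thesis
      proof (cases "Lam_star M1 M2 \<tau>")
        case (real LS)
        thus ?thesis using le L by simp
      next
        case PInf thus ?thesis by simp
      next
        case MInf thus ?thesis using L by simp
      qed
    qed
    finally show "liminf (\<lambda>n. err_exp n (\<beta> n)) \<le> Lam_star M1 M2 \<tau> - ereal \<tau> + ereal \<delta>" .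
  qed
  show ?thesis using T1 T2 T3 T4 by (auto intro: antisym)
qed

end


theorem theorem6:
  fixes M1 M2 :: "'a::polish_space measure" and \<tau> :: real
    and G :: "nat \<Rightarrow> nat \<Rightarrow> nat \<Rightarrow> bool"
  assumes "prob_space M1" and "prob_space M2"
    and "sets M1 = sets borel" and "sets M2 = sets borel"
    and "absolutely_continuous M1 M2" and "absolutely_continuous M2 M1"
    and "integrable M1 (llr M1 M2)" and "integrable M2 (llr M2 M1)"
    and "0 < KL M1 M2" and "0 < KL M2 M1"
    and "- KL M1 M2 < \<tau>" and "\<tau> < KL M2 M1"
    and "\<forall>n\<ge>2. simple_graph_on n (G n) \<and> connected_on n (G n)"
  defines "\<alpha> \<equiv> \<lambda>n. measure (PiM {1..n} (\<lambda>_. M1)) (space (PiM {1..n} (\<lambda>_. M1)) - accept_set M1 M2 \<tau> n (G n))"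
    and "\<beta> \<equiv> \<lambda>n. measure (PiM {1..n} (\<lambda>_. M2)) (accept_set M1 M2 \<tau> n (G n))"
  shows "liminf (\<lambda>n. err_exp n (\<alpha> n)) = Lam_star M1 M2 \<tau>
       \<and> liminf (\<lambda>n. err_exp n (\<beta> n)) = Lam_star M1 M2 \<tau> - ereal \<tau>"
proof -
  have sets12: "sets M1 = sets M2" using assms(3,4) by simp
  have st: "setting M1 M2 \<tau>"
    unfolding setting_def
    using assms(1) assms(2) sets12 assms(5) assms(6) assms(7) assms(8) assms(9) assms(10) assms(11) assms(12)
    by blast
  interpret s: setting M1 M2 \<tau> by (rule st)
  have "liminf (\<lambda>n. err_exp n (measure (s.PP1 n) (space (s.PP1 n) - accept_set M1 M2 \<tau> n (G n)))) = Lam_star M1 M2 \<tau>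
       \<and> liminf (\<lambda>n. err_exp n (measure (s.PP2 n) (accept_set M1 M2 \<tau> n (G n)))) = Lam_star M1 M2 \<tau> - ereal \<tau>"
    by (rule s.main[OF assms(13)])
  thus ?thesis unfolding \<alpha>_def \<beta>_def s.PP1_def s.PP2_def .
qed

end
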